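(* Let $\mathcal{X},\mathcal{Y},\mathcal{U},\mathcal{Z}$ be finite sets, $(X,Y)$ with joint distribution $P_{X,Y}$ on $\mathcal{X}\times\mathcal{Y}$ ($P_X,P_Y$ full support), $f:\mathcal{X}\times\mathcal{Y}\to\mathcal{U}$, $g:\mathcal{Y}\to\mathcal{Z}$, and assume that for all $z\in\mathcal{Z}$ and $x,x'\in\mathcal{X}$ there is $y$ with $g(y)=z$ and $P_{X,Y}(x,y)P_{X,Y}(x',y)>0$. Let $(X^n,Y^n)$ be $n$ i.i.d. copies of $(X,Y)$ and $Z^n=(g(Y_t))_{t\le n}$. Then, as $n\to\infty$, $$\inf_{c\in\mathcal{S}_n}H\big(c(X^n,Z^n)\big)=n\sum_{z\in\mathcal{Z}}P_{g(Y)}(z)H_\kappa(G^f_z)+o(n).$$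
   Context: A probabilistic graph is $(\mathcal{V},\mathcal{E},P_V)$ with a distribution on vertices; a set of vertices is independent if no two are adjacent; a coloring is a map to a finite set such that adjacent vertices get different colors. The characteristic graph $G_{[n]}$ has vertex set $\mathcal{X}^n\times\mathcal{Z}^n$ with the distribution of $(X^n,Z^n)$, and $(x^n,z^n)$, $(x'^n,z'^n)$ are adjacent iff $z^n=z'^n$ and there is $y^n$ with $g(y_t)=z_t$ for all $t$ such that $P_{X,Y}(x_t,y_t)P_{X,Y}(x'_t,y_t)>0$ for all $t\le n$ and $f(x_t,y_t)\ne f(x'_t,y_t)$ for some $t$. $T_{z^n}$ denotes the type (empirical distribution) of $z^n$, and $\mathcal{S}_n$ is the set of colorings of $G_{[n]}$ of the form $(x^n,z^n)\mapsto(T_{z^n},\tilde c(x^n,z^n))$ for some map $\tilde c$ into a finite set. For $z\in\mathcal{Z}$, $G^f_z$ has vertex set $\mathcal{X}$ with distribution $P_{X|g(Y)=z}$, and $x,x'$ adjacent iff some $y$ with $g(y)=z$, $P_{X,Y}(x,y)>0$, $P_{X,Y}(x',y)>0$ has $f(x,y)\ne f(x',y)$. The Körner graph entropy of $G$ is $H_\kappa(G)=\min I(W;V)$ with $V\sim P_V$, the minimum over conditional distributions $P_{W|V}$ of $W$ taking values in the collection of independent sets of $G$ such that $V\in W$ almost surely. *)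

theory Defs
  imports Complex_Main "HOL-Library.Landau_Symbols"
begin

definition is_joint_pmf :: "('x::finite \<Rightarrow> 'y::finite \<Rightarrow> real) \<Rightarrow> bool" where
  "is_joint_pmf P \<longleftrightarrow> (\<forall>x y. P x y \<ge> 0) \<and> (\<Sum>x\<in>UNIV. \<Sum>y\<in>UNIV. P x y) = 1"

definition entropy_of :: "('c \<Rightarrow> real) \<Rightarrow> 'c set \<Rightarrow> real" where
  "entropy_of p S = - (\<Sum>v\<in>S. p v * log 2 (p v))"


definition PXZ :: "('x::finite \<Rightarrow> 'y::finite \<Rightarrow> real) \<Rightarrow> ('y \<Rightarrow> 'z) \<Rightarrow> 'x list \<Rightarrow> 'z list \<Rightarrow> real" where
  "PXZ P g xs zs = (\<Sum>ys\<in>{ys. length ys = length xs \<and> map g ys = zs}.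
                        \<Prod>t<length xs. P (xs ! t) (ys ! t))"

definition verts :: "nat \<Rightarrow> ('x list \<times> 'z list) set" where
  "verts n = {(xs, zs). length xs = n \<and> length zs = n}"

definition char_adj :: "('x \<Rightarrow> 'y \<Rightarrow> real) \<Rightarrow> ('x \<Rightarrow> 'y \<Rightarrow> 'u) \<Rightarrow> ('y \<Rightarrow> 'z) \<Rightarrow> nat
     \<Rightarrow> ('x list \<times> 'z list) \<Rightarrow> ('x list \<times> 'z list) \<Rightarrow> bool" where
  "char_adj P f g n v w \<longleftrightarrow> (case v of (xs, zs) \<Rightarrow> case w of (xs', zs') \<Rightarrow>
     zs = zs' \<and> (\<exists>ys. length ys = n \<and> (\<forall>t<n. g (ys ! t) = zs ! t) \<and>
        (\<forall>t<n. P (xs ! t) (ys ! t) * P (xs' ! t) (ys ! t) > 0) \<and>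
        (\<exists>t<n. f (xs ! t) (ys ! t) \<noteq> f (xs' ! t) (ys ! t))))"

definition seq_type :: "'z list \<Rightarrow> 'z \<Rightarrow> real" where
  "seq_type zs = (\<lambda>a. real (card {t. t < length zs \<and> zs ! t = a}) / real (length zs))"

text \<open>A coloring of G_[n] in the class S_n: (x^n,z^n) \<mapsto> (T_{z^n}, ct(x^n,z^n)),
  where ct takes values in nat (its image on the finite vertex set is finite).\<close>
definition Sn_coloring :: "('x \<Rightarrow> 'y \<Rightarrow> real) \<Rightarrow> ('x \<Rightarrow> 'y \<Rightarrow> 'u) \<Rightarrow> ('y \<Rightarrow> 'z) \<Rightarrow> nat
     \<Rightarrow> ('x list \<Rightarrow> 'z list \<Rightarrow> nat) \<Rightarrow> bool" where
  "Sn_coloring P f g n ct \<longleftrightarrow>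
     (\<forall>v\<in>verts n. \<forall>w\<in>verts n. char_adj P f g n v w \<longrightarrow>
        (seq_type (snd v), ct (fst v) (snd v)) \<noteq> (seq_type (snd w), ct (fst w) (snd w)))"

definition coloring_entropy :: "('x::finite \<Rightarrow> 'y::finite \<Rightarrow> real) \<Rightarrow> ('y \<Rightarrow> 'z::finite) \<Rightarrow> nat
     \<Rightarrow> ('x list \<Rightarrow> 'z list \<Rightarrow> nat) \<Rightarrow> real" where
  "coloring_entropy P g n ct =
     (let c = (\<lambda>(xs, zs). (seq_type zs, ct xs zs)) in
      entropy_of (\<lambda>col. \<Sum>v\<in>{v\<in>verts n. c v = col}. PXZ P g (fst v) (snd v)) (c ` verts n))"

definition indep_set :: "('a \<Rightarrow> 'a \<Rightarrow> bool) \<Rightarrow> 'a set \<Rightarrow> bool" where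
  "indep_set adj W \<longleftrightarrow> (\<forall>v\<in>W. \<forall>w\<in>W. \<not> adj v w)"

definition mutual_info :: "('a::finite \<Rightarrow> real) \<Rightarrow> ('a \<Rightarrow> 'a set \<Rightarrow> real) \<Rightarrow> real" where
  "mutual_info q Q = (\<Sum>v\<in>UNIV. \<Sum>W\<in>UNIV. q v * Q v W *
        log 2 (Q v W / (\<Sum>v'\<in>UNIV. q v' * Q v' W)))"

definition admissible_cond :: "('a::finite \<Rightarrow> 'a \<Rightarrow> bool) \<Rightarrow> ('a \<Rightarrow> 'a set \<Rightarrow> real) \<Rightarrow> bool" where
  "admissible_cond adj Q \<longleftrightarrow>
     (\<forall>v W. Q v W \<ge> 0) \<and> (\<forall>v. (\<Sum>W\<in>UNIV. Q v W) = 1) \<and>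
     (\<forall>v W. Q v W > 0 \<longrightarrow> v \<in> W \<and> indep_set adj W)"

definition korner_entropy :: "('a::finite \<Rightarrow> 'a \<Rightarrow> bool) \<Rightarrow> ('a \<Rightarrow> real) \<Rightarrow> real" where
  "korner_entropy adj q = Inf {mutual_info q Q | Q. admissible_cond adj Q}"

definition PgY :: "('x::finite \<Rightarrow> 'y::finite \<Rightarrow> real) \<Rightarrow> ('y \<Rightarrow> 'z) \<Rightarrow> 'z \<Rightarrow> real" where
  "PgY P g z = (\<Sum>x\<in>UNIV. \<Sum>y\<in>{y. g y = z}. P x y)"

definition Gz_adj :: "('x \<Rightarrow> 'y \<Rightarrow> real) \<Rightarrow> ('x \<Rightarrow> 'y \<Rightarrow> 'u) \<Rightarrow> ('y \<Rightarrow> 'z) \<Rightarrow> 'z \<Rightarrow> 'x \<Rightarrow> 'x \<Rightarrow> bool" where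
  "Gz_adj P f g z x x' \<longleftrightarrow> (\<exists>y. g y = z \<and> P x y > 0 \<and> P x' y > 0 \<and> f x y \<noteq> f x' y)"

definition Gz_dist :: "('x::finite \<Rightarrow> 'y::finite \<Rightarrow> real) \<Rightarrow> ('y \<Rightarrow> 'z) \<Rightarrow> 'z \<Rightarrow> 'x \<Rightarrow> real" where
  "Gz_dist P g z x = (\<Sum>y\<in>{y. g y = z}. P x y) / PgY P g z"

end

theory Submission
  imports Defs "HOL-Library.Nat_Bijection" "HOL-Library.FuncSet"
begin

lemma finite_lists_A: "finite {xs::'a::finite list. length xs = n \<and> P xs}"
  by (rule finite_subset[OF _ finite_lists_length_eq[of "UNIV::'a set" n]]) auto

lemma lists_Suc_image:
  "{xs::'a list. length xs = Suc n \<and> (\<forall>t<Suc n. xs!t \<in> A t)} =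
   (\<lambda>(a,xs). a#xs) ` (A 0 \<times> {xs. length xs = n \<and> (\<forall>t<n. xs!t \<in> A (Suc t))})"
proof (rule set_eqI, rule iffI)
  fix ys assume "ys \<in> {xs::'a list. length xs = Suc n \<and> (\<forall>t<Suc n. xs!t \<in> A t)}"
  then obtain a xs where ys: "ys = a#xs" and l: "length xs = n" and h: "\<forall>t<Suc n. ys!t \<in> A t"
    by (cases ys) auto
  have "a \<in> A 0" using h ys by auto
  moreover have "\<forall>t<n. xs!t \<in> A (Suc t)" using h ys by auto
  ultimately show "ys \<in> (\<lambda>(a,xs). a#xs) ` (A 0 \<times> {xs. length xs = n \<and> (\<forall>t<n. xs!t \<in> A (Suc t))})"
    using ys l by auto
next
  fix ys assume "ys \<in> (\<lambda>(a,xs). a#xs) ` (A 0 \<times> {xs. length xs = n \<and> (\<forall>t<n. xs!t \<in> A (Suc t))})"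
  then show "ys \<in> {xs::'a list. length xs = Suc n \<and> (\<forall>t<Suc n. xs!t \<in> A t)}"
    by (auto simp: less_Suc_eq_0_disj)
qed

lemma sum_prod_lists:
  fixes f :: "nat \<Rightarrow> 'a::finite \<Rightarrow> real"
  shows "(\<Sum>xs\<in>{xs. length xs = n \<and> (\<forall>t<n. xs!t \<in> A t)}. \<Prod>t<n. f t (xs!t))
        = (\<Prod>t<n. \<Sum>a\<in>A t. f t a)"
proof (induction n arbitrary: f A)
  case 0
  have "{xs::'a list. length xs = 0 \<and> (\<forall>t<0. xs!t \<in> A t)} = {[]}" by auto
  then show ?case by simp
next
  case (Suc n)
  let ?S = "{xs. length xs = n \<and> (\<forall>t<n. xs!t \<in> A (Suc t))}"
  have inj: "inj_on (\<lambda>(a,xs). a#xs) (A 0 \<times> ?S)" by (auto simp: inj_on_def)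
  have "(\<Sum>xs\<in>{xs. length xs = Suc n \<and> (\<forall>t<Suc n. xs!t \<in> A t)}. \<Prod>t<Suc n. f t (xs!t))
      = (\<Sum>p\<in>A 0 \<times> ?S. \<Prod>t<Suc n. f t ((case p of (a,xs) \<Rightarrow> a#xs)!t))"
    unfolding lists_Suc_image by (subst sum.reindex[OF inj]) (simp add: case_prod_unfold)
  also have "\<dots> = (\<Sum>a\<in>A 0. \<Sum>xs\<in>?S. f 0 a * (\<Prod>t<n. f (Suc t) (xs!t)))"
    by (simp only: sum.cartesian_product) (simp del: prod.lessThan_Suc add: prod.lessThan_Suc_shift case_prod_unfold)
  also have "\<dots> = (\<Sum>a\<in>A 0. f 0 a) * (\<Sum>xs\<in>?S. (\<Prod>t<n. f (Suc t) (xs!t)))"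
    by (simp add: sum_product)
  also have "\<dots> = (\<Sum>a\<in>A 0. f 0 a) * (\<Prod>t<n. \<Sum>a\<in>A (Suc t). f (Suc t) a)"
    using Suc.IH[of "\<lambda>t. f (Suc t)" "\<lambda>t. A (Suc t)"] by simp
  also have "\<dots> = (\<Prod>t<Suc n. \<Sum>a\<in>A t. f t a)"
    by (simp only: prod.lessThan_Suc_shift)
  finally show ?case .
qed

lemma sum_prod_lists_UNIV:
  fixes f :: "nat \<Rightarrow> 'a::finite \<Rightarrow> real"
  shows "(\<Sum>xs\<in>{xs. length xs = n}. \<Prod>t<n. f t (xs!t)) = (\<Prod>t<n. \<Sum>a\<in>UNIV. f t a)"
  using sum_prod_lists[where n=n and A="\<lambda>_. UNIV" and f=f] by simp


lemma gibbs:
  fixes \<mu> \<nu> :: "'a \<Rightarrow> real"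
  assumes "finite S" "\<forall>i\<in>S. \<mu> i > 0" "\<forall>i\<in>S. \<nu> i > 0" "sum \<nu> S \<le> sum \<mu> S"
  shows "(\<Sum>i\<in>S. \<mu> i * log 2 (\<mu> i / \<nu> i)) \<ge> 0"
proof -
  have le: "\<mu> i * log 2 (\<nu> i / \<mu> i) \<le> (\<nu> i - \<mu> i) / ln 2" if "i \<in> S" for i
  proof -
    have m: "\<mu> i > 0" and n: "\<nu> i > 0" using assms that by auto
    have "ln (\<nu> i / \<mu> i) \<le> \<nu> i / \<mu> i - 1" using m n by (intro ln_le_minus_one) simp
    then have "\<mu> i * ln (\<nu> i / \<mu> i) \<le> \<mu> i * (\<nu> i / \<mu> i - 1)"
      using m by (intro mult_left_mono) auto
    also have "\<dots> = \<nu> i - \<mu> i" using m by (simp add: field_simps)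
    finally have "\<mu> i * ln (\<nu> i / \<mu> i) \<le> \<nu> i - \<mu> i" .
    then show ?thesis by (simp add: log_def divide_right_mono)
  qed
  have "(\<Sum>i\<in>S. \<mu> i * log 2 (\<nu> i / \<mu> i)) \<le> (\<Sum>i\<in>S. (\<nu> i - \<mu> i) / ln 2)"
    using le by (rule sum_mono)
  also have "\<dots> = (sum \<nu> S - sum \<mu> S) / ln 2" by (simp add: sum_divide_distrib[symmetric] sum_subtractf)
  also have "\<dots> \<le> 0" using assms(4) by (simp add: divide_nonpos_pos)
  finally have "(\<Sum>i\<in>S. \<mu> i * log 2 (\<nu> i / \<mu> i)) \<le> 0" .
  moreover have "\<mu> i * log 2 (\<mu> i / \<nu> i) = - (\<mu> i * log 2 (\<nu> i / \<mu> i))" if "i \<in> S" for i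
    using assms that by (simp add: log_divide algebra_simps)
  ultimately show ?thesis by (simp add: sum_negf)
qed

lemma finite_len: "finite {xs::'a::finite list. length xs = n}"
  using finite_lists_A[of n "\<lambda>_. True"] by simp

lemma sum_prod_verts:
  fixes F :: "nat \<Rightarrow> 'x::finite \<Rightarrow> 'z::finite \<Rightarrow> real"
  shows "(\<Sum>v\<in>{v\<in>verts n. \<forall>t<n. (fst v!t, snd v!t) \<in> A t}. \<Prod>t<n. F t (fst v!t) (snd v!t))
       = (\<Prod>t<n. \<Sum>p\<in>A t. F t (fst p) (snd p))"
proof -
  let ?L = "{ls::('x\<times>'z) list. length ls = n \<and> (\<forall>t<n. ls!t \<in> A t)}"
  let ?h = "\<lambda>ls::('x\<times>'z) list. (map fst ls, map snd ls)"
  have inj: "inj_on ?h ?L"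
  proof (rule inj_onI)
    fix ls ls' assume "?h ls = ?h ls'"
    then have "map fst ls = map fst ls'" "map snd ls = map snd ls'" by auto
    then have "zip (map fst ls) (map snd ls) = zip (map fst ls') (map snd ls')" by simp
    then show "ls = ls'" by (simp only: zip_map_fst_snd)
  qed
  have img: "?h ` ?L = {v\<in>verts n. \<forall>t<n. (fst v!t, snd v!t) \<in> A t}"
  proof (rule set_eqI, rule iffI)
    fix v assume "v \<in> ?h ` ?L"
    then obtain ls where ls: "ls \<in> ?L" "v = ?h ls" by blast
    then show "v \<in> {v\<in>verts n. \<forall>t<n. (fst v!t, snd v!t) \<in> A t}"
      by (simp add: verts_def)
  next
    fix v assume v: "v \<in> {v\<in>verts n. \<forall>t<n. (fst v!t, snd v!t) \<in> A t}"
    obtain xs zs where vv: "v = (xs, zs)" by (cases v)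
    have l: "length xs = n" "length zs = n" using v vv by (auto simp: verts_def)
    have h1: "?h (zip xs zs) = v" using l vv by simp
    have h2: "zip xs zs \<in> ?L"
    proof -
      have "\<forall>t<n. (xs!t, zs!t) \<in> A t" using v unfolding vv by simp
      then have "\<forall>t<n. zip xs zs ! t \<in> A t" using l by simp
      then show ?thesis using l by simp
    qed
    show "v \<in> ?h ` ?L" using h2 h1[symmetric] by (rule rev_image_eqI)
  qed
  have "(\<Sum>v\<in>{v\<in>verts n. \<forall>t<n. (fst v!t, snd v!t) \<in> A t}. \<Prod>t<n. F t (fst v!t) (snd v!t))
      = (\<Sum>ls\<in>?L. \<Prod>t<n. F t (fst (ls!t)) (snd (ls!t)))"
    unfolding img[symmetric] sum.reindex[OF inj]
    unfolding comp_def by (rule sum.cong[OF refl], rule prod.cong[OF refl]) simp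
  also have "\<dots> = (\<Prod>t<n. \<Sum>p\<in>A t. F t (fst p) (snd p))"
    by (rule sum_prod_lists)
  finally show ?thesis .
qed

lemma finite_verts: "finite (verts n :: ('x::finite list \<times> 'z::finite list) set)"
proof -
  have "verts n = {xs::'x list. length xs = n} \<times> {zs::'z list. length zs = n}"
    by (auto simp: verts_def)
  then show ?thesis by (simp add: finite_len)
qed


locale LS =
  fixes P :: "'x::finite \<Rightarrow> 'y::finite \<Rightarrow> real" and f :: "'x \<Rightarrow> 'y \<Rightarrow> 'u"
    and g :: "'y \<Rightarrow> 'z::finite"
  assumes pmf: "is_joint_pmf P" and A4: "\<forall>z x x'. \<exists>y. g y = z \<and> P x y * P x' y > 0"
begin

definition Pxz :: "'x \<Rightarrow> 'z \<Rightarrow> real" where "Pxz x z = (\<Sum>y\<in>{y. g y = z}. P x y)"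

lemma P_nonneg: "P x y \<ge> 0" using pmf by (simp add: is_joint_pmf_def)

lemma P_sum: "(\<Sum>x\<in>UNIV. \<Sum>y\<in>UNIV. P x y) = 1" using pmf by (simp add: is_joint_pmf_def)

lemma exists_pos: "\<exists>y. g y = z \<and> P x y > 0"
proof -
  obtain y where "g y = z" "P x y * P x y > 0" using A4 by blast
  then show ?thesis using P_nonneg[of x y] by (intro exI[of _ y]) (auto simp: zero_less_mult_iff)
qed

lemma Pxz_pos: "Pxz x z > 0"
proof -
  obtain y where "g y = z" "P x y > 0" using exists_pos by blast
  then show ?thesis unfolding Pxz_def by (intro sum_pos2[of _ y]) (auto simp: P_nonneg)
qed

lemma Pxz_nonneg: "Pxz x z \<ge> 0" using Pxz_pos[of x z] by simp

lemma sum_z_Pxz: "(\<Sum>z\<in>UNIV. Pxz x z) = (\<Sum>y\<in>UNIV. P x y)"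
  unfolding Pxz_def using sum.group[of "UNIV::'y set" "UNIV::'z set" g "P x"] by simp

lemma sum_Pxz: "(\<Sum>x\<in>UNIV. \<Sum>z\<in>UNIV. Pxz x z) = 1"
  by (simp add: sum_z_Pxz P_sum)

lemma PgY_eq: "PgY P g z = (\<Sum>x\<in>UNIV. Pxz x z)" by (simp add: PgY_def Pxz_def)

lemma PgY_pos: "PgY P g z > 0"
  unfolding PgY_eq by (rule sum_pos2[of _ undefined]) (auto simp: Pxz_pos Pxz_nonneg)

lemma sum_PgY: "(\<Sum>z\<in>UNIV. PgY P g z) = 1"
  unfolding PgY_eq by (subst sum.swap) (rule sum_Pxz)

lemma Gz_dist_eq: "Gz_dist P g z x = Pxz x z / PgY P g z"
  by (simp add: Gz_dist_def Pxz_def)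

lemma Gz_dist_pos: "Gz_dist P g z x > 0"
  by (simp add: Gz_dist_eq Pxz_pos PgY_pos)

lemma sum_Gz_dist: "(\<Sum>x\<in>UNIV. Gz_dist P g z x) = 1"
  using PgY_pos[of z] by (simp add: Gz_dist_eq sum_divide_distrib[symmetric] PgY_eq[symmetric])

lemma PXZ_prod:
  assumes "length xs = n" "length zs = n"
  shows "PXZ P g xs zs = (\<Prod>t<n. Pxz (xs!t) (zs!t))"
proof -
  have "{ys. length ys = length xs \<and> map g ys = zs} = {ys. length ys = n \<and> (\<forall>t<n. ys!t \<in> {y. g y = zs!t})}"
    using assms by (auto simp: list_eq_iff_nth_eq)
  then show ?thesis
    unfolding PXZ_def Pxz_def using assms sum_prod_lists[where f="\<lambda>t y. P (xs!t) y" and A="\<lambda>t. {y. g y = zs!t}" and n=n]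
    by simp
qed

lemma sum_Pxz_pairs: "(\<Sum>p\<in>UNIV. Pxz (fst p) (snd p)) = 1"
  using sum_Pxz by (simp add: UNIV_Times_UNIV[symmetric] sum.cartesian_product case_prod_unfold del: UNIV_Times_UNIV)

abbreviation mu :: "'x list \<times> 'z list \<Rightarrow> real" where "mu v \<equiv> PXZ P g (fst v) (snd v)"

lemma mu_prod: "v \<in> verts n \<Longrightarrow> mu v = (\<Prod>t<n. Pxz (fst v!t) (snd v!t))"
  by (rule PXZ_prod) (auto simp: verts_def)

lemma mu_pos: "v \<in> verts n \<Longrightarrow> mu v > 0"
  by (simp add: mu_prod Pxz_pos prod_pos)

lemma PXZ_nonneg[simp]: "PXZ P g xs zs \<ge> 0"
  unfolding PXZ_def by (intro sum_nonneg prod_nonneg) (simp add: P_nonneg)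

lemma mu_nonneg: "mu v \<ge> 0" by simp

lemma PXZ_pos: "(xs, zs) \<in> verts n \<Longrightarrow> PXZ P g xs zs > 0"
  using mu_pos[of "(xs,zs)"] by simp

lemma sum_mu: "(\<Sum>v\<in>verts n. mu v) = 1"
proof -
  have "(\<Sum>v\<in>verts n. mu v) = (\<Sum>v\<in>{v\<in>verts n. \<forall>t<n. (fst v!t, snd v!t) \<in> UNIV}. \<Prod>t<n. Pxz (fst v!t) (snd v!t))"
    by (simp add: mu_prod)
  also have "\<dots> = (\<Prod>t<n. \<Sum>p\<in>UNIV. Pxz (fst p) (snd p))"
    by (rule sum_prod_verts)
  also have "(\<Sum>p\<in>UNIV. Pxz (fst p) (snd p)) = 1"
    by (rule sum_Pxz_pairs)
  finally show ?thesis by simp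
qed

lemma marg:
  assumes "t0 < n"
  shows "(\<Sum>v\<in>{v\<in>verts n. fst v!t0 = x \<and> snd v!t0 = z}. mu v) = Pxz x z"
proof -
  let ?A = "\<lambda>t. if t = t0 then {(x,z)} else UNIV"
  have "{v\<in>verts n. fst v!t0 = x \<and> snd v!t0 = z} = {v\<in>verts n. \<forall>t<n. (fst v!t, snd v!t) \<in> ?A t}"
    using assms by auto
  then have "(\<Sum>v\<in>{v\<in>verts n. fst v!t0 = x \<and> snd v!t0 = z}. mu v)
     = (\<Sum>v\<in>{v\<in>verts n. \<forall>t<n. (fst v!t, snd v!t) \<in> ?A t}. mu v)" by simp
  also have "\<dots> = (\<Sum>v\<in>{v\<in>verts n. \<forall>t<n. (fst v!t, snd v!t) \<in> ?A t}. \<Prod>t<n. Pxz (fst v!t) (snd v!t))"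
    by (rule sum.cong[OF refl]) (simp add: mu_prod)
  also have "\<dots> = (\<Prod>t<n. \<Sum>p\<in>?A t. Pxz (fst p) (snd p))"
    by (rule sum_prod_verts)
  also have "\<dots> = (\<Prod>t<n. if t = t0 then Pxz x z else 1)"
  proof (rule prod.cong[OF refl])
    fix t
    have "(\<Sum>p\<in>UNIV. Pxz (fst p) (snd p)) = 1"
      by (rule sum_Pxz_pairs)
    then show "(\<Sum>p\<in>?A t. Pxz (fst p) (snd p)) = (if t = t0 then Pxz x z else 1)" by simp
  qed
  also have "\<dots> = Pxz x z" using assms by (simp add: prod.delta)
  finally show ?thesis .
qed

end

lemma log2_prod: "finite I \<Longrightarrow> (\<And>i. i \<in> I \<Longrightarrow> h i \<noteq> 0) \<Longrightarrow> log 2 (prod h I) = (\<Sum>i\<in>I. log 2 (h i))"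
  unfolding log_def by (simp add: ln_prod sum_divide_distrib)

lemma sum_UNIV_pair: "(\<Sum>i\<in>(UNIV::('a::finite\<times>'b::finite) set). h i) = (\<Sum>v\<in>UNIV. \<Sum>w\<in>UNIV. h (v,w))"
  by (simp only: UNIV_Times_UNIV[symmetric] sum.cartesian_product')

lemma sum_pair_prod:
  fixes a :: "'a::finite \<Rightarrow> real" and b :: "'b::finite \<Rightarrow> real"
  shows   "(\<Sum>i\<in>(UNIV::('a::finite\<times>'b::finite) set). a (fst i) * b (snd i)) = (\<Sum>v\<in>UNIV. a v) * (\<Sum>w\<in>UNIV. b w)"
  unfolding sum_UNIV_pair sum_product by simp

lemma mutual_info_nonneg:
  fixes q :: "'a::finite \<Rightarrow> real"
  assumes q: "\<forall>v. q v > 0" "sum q UNIV = 1" and Q: "\<forall>v W. Q v W \<ge> 0" "\<forall>v. (\<Sum>W\<in>UNIV. Q v W) = 1"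
  shows "mutual_info q Q \<ge> 0"
proof -
  let ?r = "\<lambda>W. \<Sum>v'\<in>UNIV. q v' * Q v' W"
  let ?S = "{p. q (fst p) * Q (fst p) (snd p) > 0}"
  have qQ_nn: "q v * Q v W \<ge> 0" for v W using q Q by (simp add: less_imp_le)
  have r_nn: "?r W \<ge> 0" for W by (rule sum_nonneg) (simp add: qQ_nn)
  have r_ge: "?r W \<ge> q v * Q v W" for v W
    by (rule member_le_sum) (simp_all add: qQ_nn)
  have "mutual_info q Q = (\<Sum>p\<in>UNIV. q (fst p) * Q (fst p) (snd p) * log 2 (Q (fst p) (snd p) / ?r (snd p)))"
    unfolding mutual_info_def UNIV_Times_UNIV[symmetric] sum.cartesian_product by (simp add: case_prod_unfold)
  also have "\<dots> = (\<Sum>p\<in>?S. q (fst p) * Q (fst p) (snd p) * log 2 (Q (fst p) (snd p) / ?r (snd p)))"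
  proof (rule sum.mono_neutral_right)
    show "\<forall>i\<in>UNIV - ?S. q (fst i) * Q (fst i) (snd i) * log 2 (Q (fst i) (snd i) / ?r (snd i)) = 0"
    proof
      fix i assume "i \<in> UNIV - ?S"
      then have "q (fst i) * Q (fst i) (snd i) = 0" using qQ_nn[of "fst i" "snd i"] by simp
      then show "q (fst i) * Q (fst i) (snd i) * log 2 (Q (fst i) (snd i) / ?r (snd i)) = 0" by simp
    qed
  qed auto
  also have "\<dots> = (\<Sum>p\<in>?S. q (fst p) * Q (fst p) (snd p) * log 2 ((q (fst p) * Q (fst p) (snd p)) / (q (fst p) * ?r (snd p))))"
    using q by (intro sum.cong refl) simp
  also have "\<dots> \<ge> 0"
  proof (rule gibbs)
    show "\<forall>i\<in>?S. 0 < q (fst i) * Q (fst i) (snd i)" by simp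
    show "\<forall>i\<in>?S. 0 < q (fst i) * ?r (snd i)"
    proof
      fix i assume "i \<in> ?S"
      then have "0 < q (fst i) * Q (fst i) (snd i)" by simp
      also have "\<dots> \<le> ?r (snd i)" by (rule r_ge)
      finally show "0 < q (fst i) * ?r (snd i)" using q by simp
    qed
    have "(\<Sum>i\<in>?S. q (fst i) * ?r (snd i)) \<le> (\<Sum>i\<in>UNIV. q (fst i) * ?r (snd i))"
      by (rule sum_mono2) (use q r_nn in \<open>simp_all add: less_imp_le\<close>)
    also have "\<dots> = (\<Sum>v\<in>UNIV. q v) * (\<Sum>W\<in>UNIV. ?r W)"
      by (rule sum_pair_prod)
    also have "(\<Sum>W\<in>UNIV. ?r W) = 1"
      using q Q by (subst sum.swap) (simp add: sum_distrib_left[symmetric])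
    finally have h1: "(\<Sum>i\<in>?S. q (fst i) * ?r (snd i)) \<le> 1" using q by simp
    have "(\<Sum>i\<in>?S. q (fst i) * Q (fst i) (snd i)) = (\<Sum>i\<in>UNIV. q (fst i) * Q (fst i) (snd i))"
    proof (rule sum.mono_neutral_left)
      show "\<forall>i\<in>UNIV - ?S. q (fst i) * Q (fst i) (snd i) = 0" using qQ_nn by (simp add: order_less_le)
    qed auto
    also have "\<dots> = 1"
      unfolding sum_UNIV_pair using q Q by (simp add: sum_distrib_left[symmetric])
    finally show "(\<Sum>i\<in>?S. q (fst i) * ?r (snd i)) \<le> (\<Sum>i\<in>?S. q (fst i) * Q (fst i) (snd i))"
      using h1 by simp
  qed simp
  finally show ?thesis .
qed

lemma korner_le:
  fixes q :: "'a::finite \<Rightarrow> real"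
  assumes q: "\<forall>v. q v > 0" "sum q UNIV = 1" and adm: "admissible_cond adj Q"
  shows "korner_entropy adj q \<le> mutual_info q Q"
  unfolding korner_entropy_def
proof (rule cInf_lower)
  show "mutual_info q Q \<in> {mutual_info q Q |Q. admissible_cond adj Q}" using adm by blast
  show "bdd_below {mutual_info q Q |Q. admissible_cond adj Q}"
    by (rule bdd_belowI[of _ 0]) (use q in \<open>auto simp: admissible_cond_def intro!: mutual_info_nonneg\<close>)
qed


context LS begin

definition Wp :: "nat \<Rightarrow> ('x list \<times> 'z list \<Rightarrow> 'c) \<Rightarrow> nat \<Rightarrow> 'c \<Rightarrow> 'z list \<Rightarrow> 'x set" where
  "Wp n c t col zs = {xs'!t | xs'. length xs' = n \<and> c (xs', zs) = col}"
definition wv :: "nat \<Rightarrow> ('x list \<times> 'z list \<Rightarrow> 'c) \<Rightarrow> nat \<Rightarrow> 'x list \<times> 'z list \<Rightarrow> 'x set" where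
  "wv n c t v = Wp n c t (c v) (snd v)"
definition aa :: "nat \<Rightarrow> ('x list \<times> 'z list \<Rightarrow> 'c) \<Rightarrow> nat \<Rightarrow> 'x \<Rightarrow> 'x set \<Rightarrow> 'z \<Rightarrow> real" where
  "aa n c t x W z = (\<Sum>v\<in>{v\<in>verts n. fst v!t = x \<and> wv n c t v = W \<and> snd v!t = z}. mu v)"
definition bb :: "nat \<Rightarrow> ('x list \<times> 'z list \<Rightarrow> 'c) \<Rightarrow> nat \<Rightarrow> 'x set \<Rightarrow> 'z \<Rightarrow> real" where
  "bb n c t W z = (\<Sum>v\<in>{v\<in>verts n. wv n c t v = W \<and> snd v!t = z}. mu v)"
definition pcol :: "nat \<Rightarrow> ('x list \<times> 'z list \<Rightarrow> 'c) \<Rightarrow> 'c \<Rightarrow> real" where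
  "pcol n c col = (\<Sum>v\<in>{v\<in>verts n. c v = col}. mu v)"

lemma aa_nonneg: "aa n c t x W z \<ge> 0"
  unfolding aa_def by (rule sum_nonneg) simp

lemma bb_nonneg: "bb n c t W z \<ge> 0"
  unfolding bb_def by (rule sum_nonneg) simp

lemma aa_pos: "v \<in> verts n \<Longrightarrow> aa n c t (fst v!t) (wv n c t v) (snd v!t) > 0"
  unfolding aa_def by (rule sum_pos2[of _ v]) (auto simp: finite_verts mu_pos)

lemma bb_pos: "v \<in> verts n \<Longrightarrow> bb n c t (wv n c t v) (snd v!t) > 0"
  unfolding bb_def by (rule sum_pos2[of _ v]) (auto simp: finite_verts mu_pos)

lemma pcol_pos: "v \<in> verts n \<Longrightarrow> pcol n c (c v) > 0"
  unfolding pcol_def by (rule sum_pos2[of _ v]) (auto simp: finite_verts mu_pos)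

lemma sum_aa: "(\<Sum>x\<in>UNIV. aa n c t x W z) = bb n c t W z"
proof -
  let ?S = "{v\<in>verts n. wv n c t v = W \<and> snd v!t = z}"
  have "(\<Sum>x\<in>UNIV. \<Sum>v\<in>{v\<in>?S. fst v!t = x}. mu v) = (\<Sum>v\<in>?S. mu v)"
    by (rule sum.group) (auto simp: finite_verts)
  moreover have "{v\<in>?S. fst v!t = x} = {v\<in>verts n. fst v!t = x \<and> wv n c t v = W \<and> snd v!t = z}" for x
    by blast
  ultimately show ?thesis unfolding aa_def bb_def by simp
qed

lemma sum_W_aa: "t < n \<Longrightarrow> (\<Sum>W\<in>UNIV. aa n c t x W z) = Pxz x z"
proof -
  assume t: "t < n"
  let ?S = "{v\<in>verts n. fst v!t = x \<and> snd v!t = z}"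
  have "(\<Sum>W\<in>UNIV. \<Sum>v\<in>{v\<in>?S. wv n c t v = W}. mu v) = (\<Sum>v\<in>?S. mu v)"
    by (rule sum.group) (auto simp: finite_verts)
  moreover have "{v\<in>?S. wv n c t v = W} = {v\<in>verts n. fst v!t = x \<and> wv n c t v = W \<and> snd v!t = z}" for W
    by blast
  ultimately show ?thesis unfolding aa_def using marg[OF t] by simp
qed

lemma sum_pcol: "(\<Sum>col\<in>c ` verts n. pcol n c col) = 1"
  unfolding pcol_def using sum.group[of "verts n" "c ` verts n" c mu] sum_mu[of n]
  by (simp add: finite_verts)

lemma entropy_eq:
  "entropy_of (pcol n c) (c ` verts n) = - (\<Sum>v\<in>verts n. mu v * log 2 (pcol n c (c v)))"
proof -
  have "(\<Sum>col\<in>c ` verts n. pcol n c col * log 2 (pcol n c col))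
      = (\<Sum>col\<in>c ` verts n. \<Sum>v\<in>{v\<in>verts n. c v = col}. mu v * log 2 (pcol n c (c v)))"
    unfolding pcol_def[of n c] by (intro sum.cong refl) (simp add: sum_distrib_right)
  also have "\<dots> = (\<Sum>v\<in>verts n. mu v * log 2 (pcol n c (c v)))"
    by (rule sum.group) (auto simp: finite_verts)
  finally show ?thesis unfolding entropy_of_def by simp
qed

end

lemma log2_mult_pos: "(a::real) > 0 \<Longrightarrow> b > 0 \<Longrightarrow> log 2 (a*b) = log 2 a + log 2 b"
  by (simp add: log_mult)

lemma log2_div_pos: "(a::real) > 0 \<Longrightarrow> b > 0 \<Longrightarrow> log 2 (a/b) = log 2 a - log 2 b"
  by (simp add: log_divide)

context LS begin

definition GG :: "nat \<Rightarrow> ('x list \<times> 'z list \<Rightarrow> 'c) \<Rightarrow> 'c \<Rightarrow> 'x list \<times> 'z list \<Rightarrow> real" where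
  "GG n c col v = (\<Prod>t<n. PgY P g (snd v!t) * aa n c t (fst v!t) (Wp n c t col (snd v)) (snd v!t)
                          / bb n c t (Wp n c t col (snd v)) (snd v!t))"

lemma GG_nonneg: "GG n c col v \<ge> 0"
  unfolding GG_def using PgY_pos
  by (intro prod_nonneg ballI divide_nonneg_nonneg mult_nonneg_nonneg aa_nonneg bb_nonneg less_imp_le) auto

lemma sum_PgY_lists: "(\<Sum>zs\<in>{zs. length zs = n}. \<Prod>t<n. PgY P g (zs!t)) = 1"
  using sum_prod_lists_UNIV[where f="\<lambda>t z. PgY P g z" and n=n] by (simp add: sum_PgY)

lemma GG_sum: "(\<Sum>v\<in>{v\<in>verts n. c v = col}. GG n c col v) \<le> 1"
proof -
  define Zc where "Zc = {zs::'z list. length zs = n \<and> (\<exists>xs. length xs = n \<and> c (xs,zs) = col)}"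
  have fZc: "finite Zc" unfolding Zc_def by (rule finite_lists_A)
  have "(\<Sum>v\<in>{v\<in>verts n. c v = col}. GG n c col v) \<le> (\<Sum>v\<in>{xs::'x list. length xs = n} \<times> Zc. GG n c col v)"
  proof (rule sum_mono2)
    show "finite ({xs::'x list. length xs = n} \<times> Zc)" using fZc by (simp add: finite_len)
    show "{v \<in> verts n. c v = col} \<subseteq> {xs::'x list. length xs = n} \<times> Zc"
      unfolding Zc_def verts_def by auto
  qed (simp add: GG_nonneg)
  also have "\<dots> = (\<Sum>zs\<in>Zc. \<Sum>xs\<in>{xs::'x list. length xs = n}. GG n c col (xs, zs))"
    by (simp only: sum.cartesian_product') (rule sum.swap)
  also have "\<dots> = (\<Sum>zs\<in>Zc. \<Prod>t<n. PgY P g (zs!t))"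
  proof (rule sum.cong[OF refl])
    fix zs assume "zs \<in> Zc"
    then obtain xs0 where l: "length zs = n" "length xs0 = n" and c0: "c (xs0, zs) = col"
      unfolding Zc_def by auto
    have v0: "(xs0, zs) \<in> verts n" using l by (simp add: verts_def)
    have bpos: "bb n c t (Wp n c t col zs) (zs!t) > 0" for t
      using bb_pos[OF v0, of c t] c0 by (simp add: wv_def)
    have "(\<Sum>xs\<in>{xs::'x list. length xs = n}. GG n c col (xs, zs))
        = (\<Sum>xs\<in>{xs::'x list. length xs = n}. \<Prod>t<n. (\<lambda>t x. PgY P g (zs!t) * aa n c t x (Wp n c t col zs) (zs!t)
                          / bb n c t (Wp n c t col zs) (zs!t)) t (xs!t))"
      unfolding GG_def by simp
    also have "\<dots> = (\<Prod>t<n. \<Sum>x\<in>UNIV. PgY P g (zs!t) * aa n c t x (Wp n c t col zs) (zs!t)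
                          / bb n c t (Wp n c t col zs) (zs!t))"
      by (rule sum_prod_lists_UNIV)
    also have "\<dots> = (\<Prod>t<n. PgY P g (zs!t))"
    proof (rule prod.cong[OF refl])
      fix t
      have "(\<Sum>x\<in>UNIV. PgY P g (zs!t) * aa n c t x (Wp n c t col zs) (zs!t) / bb n c t (Wp n c t col zs) (zs!t))
          = PgY P g (zs!t) * (\<Sum>x\<in>UNIV. aa n c t x (Wp n c t col zs) (zs!t)) / bb n c t (Wp n c t col zs) (zs!t)"
        by (simp add: sum_distrib_left sum_divide_distrib)
      also have "\<dots> = PgY P g (zs!t)" using bpos[of t] by (simp add: sum_aa)
      finally show "(\<Sum>x\<in>UNIV. PgY P g (zs!t) * aa n c t x (Wp n c t col zs) (zs!t) / bb n c t (Wp n c t col zs) (zs!t))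
          = PgY P g (zs!t)" .
    qed
    finally show "(\<Sum>xs\<in>{xs::'x list. length xs = n}. GG n c col (xs, zs)) = (\<Prod>t<n. PgY P g (zs!t))" .
  qed
  also have "\<dots> \<le> (\<Sum>zs\<in>{zs::'z list. length zs = n}. \<Prod>t<n. PgY P g (zs!t))"
    by (rule sum_mono2) (auto simp: finite_len Zc_def PgY_pos less_imp_le intro!: prod_nonneg)
  also have "\<dots> = 1" by (rule sum_PgY_lists)
  finally show ?thesis .
qed

definition nu :: "nat \<Rightarrow> ('x list \<times> 'z list \<Rightarrow> 'c) \<Rightarrow> 'x list \<times> 'z list \<Rightarrow> real" where
  "nu n c v = pcol n c (c v) * GG n c (c v) v"

lemma sum_nu: "(\<Sum>v\<in>verts n. nu n c v) \<le> 1"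
proof -
  have "(\<Sum>v\<in>verts n. nu n c v) = (\<Sum>col\<in>c ` verts n. \<Sum>v\<in>{v\<in>verts n. c v = col}. nu n c v)"
    by (rule sum.group[symmetric]) (auto simp: finite_verts)
  also have "\<dots> = (\<Sum>col\<in>c ` verts n. pcol n c col * (\<Sum>v\<in>{v\<in>verts n. c v = col}. GG n c col v))"
    unfolding nu_def by (intro sum.cong refl) (simp add: sum_distrib_left)
  also have "\<dots> \<le> (\<Sum>col\<in>c ` verts n. pcol n c col * 1)"
  proof (rule sum_mono)
    fix col assume "col \<in> c ` verts n"
    then obtain v where "v \<in> verts n" "col = c v" by blast
    then have "pcol n c col > 0" using pcol_pos by simp
    then show "pcol n c col * (\<Sum>v\<in>{v\<in>verts n. c v = col}. GG n c col v) \<le> pcol n c col * 1"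
      using GG_sum by (intro mult_left_mono) auto
  qed
  also have "\<dots> = 1" using sum_pcol by simp
  finally show ?thesis .
qed

lemma GG_pos: "v \<in> verts n \<Longrightarrow> GG n c (c v) v > 0"
  unfolding GG_def
  by (intro prod_pos ballI divide_pos_pos mult_pos_pos PgY_pos)
     (simp_all add: aa_pos bb_pos wv_def[symmetric])

lemma nu_pos: "v \<in> verts n \<Longrightarrow> nu n c v > 0"
  unfolding nu_def by (simp add: pcol_pos GG_pos)

definition LL :: "nat \<Rightarrow> ('x list \<times> 'z list \<Rightarrow> 'c) \<Rightarrow> nat \<Rightarrow> 'x list \<times> 'z list \<Rightarrow> real" where
  "LL n c t v = log 2 (aa n c t (fst v!t) (wv n c t v) (snd v!t)
       / (Gz_dist P g (snd v!t) (fst v!t) * bb n c t (wv n c t v) (snd v!t)))"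

lemma log_mu_nu:
  assumes v: "v \<in> verts n"
  shows "log 2 (mu v / nu n c v) = - log 2 (pcol n c (c v)) - (\<Sum>t<n. LL n c t v)"
proof -
  let ?x = "\<lambda>t. fst v!t" and ?z = "\<lambda>t. snd v!t" and ?w = "\<lambda>t. wv n c t v"
  let ?k = "\<lambda>t. PgY P g (?z t) * aa n c t (?x t) (?w t) (?z t) / bb n c t (?w t) (?z t)"
  have kpos: "?k t > 0" for t
    using aa_pos[OF v, of c t] bb_pos[OF v, of c t] PgY_pos[of "?z t"] by (intro divide_pos_pos mult_pos_pos)
  have nu_eq: "nu n c v = pcol n c (c v) * (\<Prod>t<n. ?k t)"
    unfolding nu_def GG_def wv_def by simp
  have "log 2 (mu v / nu n c v) = log 2 (mu v) - log 2 (nu n c v)"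
    using mu_pos[OF v] nu_pos[OF v, of c] by (simp add: log_divide)
  also have "log 2 (mu v) = (\<Sum>t<n. log 2 (Pxz (?x t) (?z t)))"
    unfolding mu_prod[OF v] by (rule log2_prod) (auto simp: Pxz_pos less_imp_neq[symmetric])
  also have "log 2 (nu n c v) = log 2 (pcol n c (c v)) + (\<Sum>t<n. log 2 (?k t))"
  proof -
    have pp: "pcol n c (c v) > 0" by (rule pcol_pos[OF v])
    have kp: "(\<Prod>t<n. ?k t) > 0" using kpos by (simp add: prod_pos)
    have "log 2 (\<Prod>t<n. ?k t) = (\<Sum>t<n. log 2 (?k t))"
    proof (rule log2_prod)
      fix t show "?k t \<noteq> 0" using kpos[of t] by linarith
    qed simp
    moreover have "log 2 (pcol n c (c v) * (\<Prod>t<n. ?k t)) = log 2 (pcol n c (c v)) + log 2 (\<Prod>t<n. ?k t)"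
      using pp kp by (rule log2_mult_pos)
    ultimately show ?thesis unfolding nu_eq by simp
  qed
  also have "(\<Sum>t<n. log 2 (?k t)) = (\<Sum>t<n. log 2 (Pxz (?x t) (?z t)) + LL n c t v)"
  proof (rule sum.cong[OF refl])
    fix t
    have "aa n c t (?x t) (?w t) (?z t) / (Gz_dist P g (?z t) (?x t) * bb n c t (?w t) (?z t))
        = ?k t / Pxz (?x t) (?z t)"
      using PgY_pos[of "?z t"] Pxz_pos[of "?x t" "?z t"] by (simp add: Gz_dist_eq field_simps)
    then have "LL n c t v = log 2 (?k t / Pxz (?x t) (?z t))"
      unfolding LL_def by (simp only:)
    also have "\<dots> = log 2 (?k t) - log 2 (Pxz (?x t) (?z t))"
      using kpos[of t] Pxz_pos[of "?x t" "?z t"] by (rule log2_div_pos)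
    finally have "LL n c t v = log 2 (?k t) - log 2 (Pxz (?x t) (?z t))" .
    then show "log 2 (?k t) = log 2 (Pxz (?x t) (?z t)) + LL n c t v" by simp
  qed
  finally show ?thesis by (simp add: sum.distrib)
qed

lemma H_ge: "entropy_of (pcol n c) (c ` verts n) \<ge> (\<Sum>t<n. \<Sum>v\<in>verts n. mu v * LL n c t v)"
proof -
  have "0 \<le> (\<Sum>v\<in>verts n. mu v * log 2 (mu v / nu n c v))"
    using sum_nu[of n c] sum_mu[of n]
    by (intro gibbs) (auto simp: finite_verts mu_pos nu_pos)
  also have "\<dots> = (\<Sum>v\<in>verts n. - (mu v * log 2 (pcol n c (c v)))) - (\<Sum>v\<in>verts n. \<Sum>t<n. mu v * LL n c t v)"
    by (simp add: log_mu_nu sum_subtractf[symmetric] algebra_simps sum_distrib_left cong: sum.cong)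
  also have "\<dots> = entropy_of (pcol n c) (c ` verts n) - (\<Sum>t<n. \<Sum>v\<in>verts n. mu v * LL n c t v)"
    by (simp add: entropy_eq sum_negf sum.swap[of _ "verts n"])
  finally show ?thesis by simp
qed

end

context LS begin

lemma adj_lemma:
  assumes l: "length xs1 = n" "length xs2 = n" "length zs = n" and t: "t < n"
    and adj: "Gz_adj P f g (zs!t) (xs1!t) (xs2!t)"
  shows "char_adj P f g n (xs1, zs) (xs2, zs)"
proof -
  obtain y0 where y0: "g y0 = zs!t" "P (xs1!t) y0 > 0" "P (xs2!t) y0 > 0" "f (xs1!t) y0 \<noteq> f (xs2!t) y0"
    using adj unfolding Gz_adj_def by blast
  define ys where "ys = map (\<lambda>s. if s = t then y0 else (SOME y. g y = zs!s \<and> P (xs1!s) y * P (xs2!s) y > 0)) [0..<n]"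
  have len: "length ys = n" unfolding ys_def by simp
  have props: "g (ys!s) = zs!s \<and> P (xs1!s) (ys!s) * P (xs2!s) (ys!s) > 0" if "s < n" for s
  proof (cases "s = t")
    case True
    then show ?thesis using that y0 unfolding ys_def by simp
  next
    case False
    have "\<exists>y. g y = zs!s \<and> P (xs1!s) y * P (xs2!s) y > 0" using A4 by blast
    then have "g (SOME y. g y = zs!s \<and> P (xs1!s) y * P (xs2!s) y > 0) = zs!s \<and>
               P (xs1!s) (SOME y. g y = zs!s \<and> P (xs1!s) y * P (xs2!s) y > 0) *
               P (xs2!s) (SOME y. g y = zs!s \<and> P (xs1!s) y * P (xs2!s) y > 0) > 0"
      by (rule someI_ex)
    then show ?thesis using that False unfolding ys_def by simp
  qed
  have "f (xs1!t) (ys!t) \<noteq> f (xs2!t) (ys!t)" using y0 t unfolding ys_def by simp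
  then show ?thesis unfolding char_adj_def using len props t by auto
qed

definition QQ :: "nat \<Rightarrow> ('x list \<times> 'z list \<Rightarrow> 'c) \<Rightarrow> nat \<Rightarrow> 'z \<Rightarrow> 'x \<Rightarrow> 'x set \<Rightarrow> real" where
  "QQ n c t z x W = aa n c t x W z / Pxz x z"

lemma QQ_adm:
  assumes t: "t < n" and proper: "\<forall>v\<in>verts n. \<forall>w\<in>verts n. char_adj P f g n v w \<longrightarrow> c v \<noteq> c w"
  shows "admissible_cond (Gz_adj P f g z) (QQ n c t z)"
  unfolding admissible_cond_def
proof (intro conjI)
  show "\<forall>x W. QQ n c t z x W \<ge> 0"
  proof (intro allI)
  fix x W show "QQ n c t z x W \<ge> 0" unfolding QQ_def using Pxz_pos[of x z] aa_nonneg[of n c t x W z] by simp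
  qed
next
  show "\<forall>x. (\<Sum>W\<in>UNIV. QQ n c t z x W) = 1"
  proof
  fix x show "(\<Sum>W\<in>UNIV. QQ n c t z x W) = 1"
  proof -
    have e: "(\<Sum>W\<in>UNIV. aa n c t x W z) = Pxz x z" by (rule sum_W_aa[OF t])
    have "(\<Sum>W\<in>UNIV. QQ n c t z x W) = (\<Sum>W\<in>UNIV. aa n c t x W z) / Pxz x z"
      unfolding QQ_def by (simp add: sum_divide_distrib[symmetric])
    then show ?thesis using e Pxz_pos[of x z] by simp
  qed
  qed
next
  show "\<forall>x W. QQ n c t z x W > 0 \<longrightarrow> x \<in> W \<and> indep_set (Gz_adj P f g z) W"
  proof (intro allI impI)
  fix x W assume "QQ n c t z x W > 0"
  then have "aa n c t x W z > 0" unfolding QQ_def using Pxz_pos[of x z] by (simp add: zero_less_divide_iff)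
  then have "{v\<in>verts n. fst v!t = x \<and> wv n c t v = W \<and> snd v!t = z} \<noteq> {}"
    unfolding aa_def by (metis less_irrefl sum.empty)
  then obtain v where v: "v \<in> verts n" "fst v!t = x" "wv n c t v = W" "snd v!t = z" by blast
  have Weq: "W = {xs'!t | xs'. length xs' = n \<and> c (xs', snd v) = c v}"
    using v unfolding wv_def Wp_def by simp
  have lv: "length (fst v) = n" "length (snd v) = n" using v by (auto simp: verts_def)
  show "x \<in> W \<and> indep_set (Gz_adj P f g z) W"
  proof
    show "x \<in> W" unfolding Weq using v lv by (cases v) auto
  next
    show "indep_set (Gz_adj P f g z) W"
      unfolding indep_set_def
    proof (intro ballI notI)
      fix a b assume "a \<in> W" "b \<in> W" and ab: "Gz_adj P f g z a b"
      then obtain xs1 xs2 where x1: "a = xs1!t" "length xs1 = n" "c (xs1, snd v) = c v"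
        and x2: "b = xs2!t" "length xs2 = n" "c (xs2, snd v) = c v" unfolding Weq by blast
      have "char_adj P f g n (xs1, snd v) (xs2, snd v)"
        using adj_lemma[of xs1 n xs2 "snd v" t] x1 x2 lv t ab v(4) by simp
      moreover have "(xs1, snd v) \<in> verts n" "(xs2, snd v) \<in> verts n" using x1 x2 lv by (auto simp: verts_def)
      ultimately have "c (xs1, snd v) \<noteq> c (xs2, snd v)" using proper by blast
      then show False using x1 x2 by simp
    qed
  qed
  qed
qed

lemma sum_UNIV_triple:
  "(\<Sum>k\<in>(UNIV::('a::finite\<times>'b::finite\<times>'d::finite) set). h k) = (\<Sum>a\<in>UNIV. \<Sum>b\<in>UNIV. \<Sum>d\<in>UNIV. h (a,b,d))"
  by (simp add: sum_UNIV_pair)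

lemma LL_sum:
  assumes t: "t < n"
  shows "(\<Sum>v\<in>verts n. mu v * LL n c t v) = (\<Sum>z\<in>UNIV. PgY P g z * mutual_info (Gz_dist P g z) (QQ n c t z))"
proof -
  let ?F = "\<lambda>x W z. log 2 (aa n c t x W z / (Gz_dist P g z x * bb n c t W z))"
  let ?key = "\<lambda>v. (fst v!t, wv n c t v, snd v!t)"
  have "(\<Sum>v\<in>verts n. mu v * LL n c t v) = (\<Sum>k\<in>UNIV. \<Sum>v\<in>{v\<in>verts n. ?key v = k}. mu v * LL n c t v)"
    by (rule sum.group[symmetric]) (auto simp: finite_verts)
  also have "\<dots> = (\<Sum>k\<in>UNIV. aa n c t (fst k) (fst (snd k)) (snd (snd k)) * ?F (fst k) (fst (snd k)) (snd (snd k)))"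
  proof (rule sum.cong[OF refl])
    fix k :: "'x \<times> 'x set \<times> 'z"
    obtain x W z where k: "k = (x, W, z)" by (cases k) auto
    have "(\<Sum>v\<in>{v\<in>verts n. ?key v = k}. mu v * LL n c t v) = (\<Sum>v\<in>{v\<in>verts n. ?key v = k}. mu v * ?F x W z)"
      by (intro sum.cong refl) (simp add: LL_def k)
    also have "\<dots> = aa n c t x W z * ?F x W z"
      unfolding aa_def k by (simp add: sum_distrib_right conj_ac)
    finally show "(\<Sum>v\<in>{v\<in>verts n. ?key v = k}. mu v * LL n c t v) = aa n c t (fst k) (fst (snd k)) (snd (snd k)) * ?F (fst k) (fst (snd k)) (snd (snd k))"
      using k by simp
  qed
  also have "\<dots> = (\<Sum>x\<in>UNIV. \<Sum>W\<in>UNIV. \<Sum>z\<in>UNIV. aa n c t x W z * ?F x W z)"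
    by (simp add: sum_UNIV_triple)
  also have "\<dots> = (\<Sum>x\<in>UNIV. \<Sum>z\<in>UNIV. \<Sum>W\<in>UNIV. aa n c t x W z * ?F x W z)"
    by (rule sum.cong[OF refl], rule sum.swap)
  also have "\<dots> = (\<Sum>z\<in>UNIV. \<Sum>x\<in>UNIV. \<Sum>W\<in>UNIV. aa n c t x W z * ?F x W z)"
    by (rule sum.swap)
  also have "\<dots> = (\<Sum>z\<in>UNIV. PgY P g z * mutual_info (Gz_dist P g z) (QQ n c t z))"
  proof (rule sum.cong[OF refl])
    fix z
    have pg: "PgY P g z > 0" by (rule PgY_pos)
    have den: "(\<Sum>x'\<in>UNIV. Gz_dist P g z x' * QQ n c t z x' W) = bb n c t W z / PgY P g z" for W
    proof -
      have "(\<Sum>x'\<in>UNIV. Gz_dist P g z x' * QQ n c t z x' W) = (\<Sum>x'\<in>UNIV. aa n c t x' W z / PgY P g z)"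
      proof (rule sum.cong[OF refl])
        fix x' have "Pxz x' z > 0" by (rule Pxz_pos)
        then show "Gz_dist P g z x' * QQ n c t z x' W = aa n c t x' W z / PgY P g z"
          using pg by (simp add: QQ_def Gz_dist_eq)
      qed
      also have "\<dots> = bb n c t W z / PgY P g z" by (simp add: sum_divide_distrib[symmetric] sum_aa)
      finally show ?thesis .
    qed
    have tm: "PgY P g z * (Gz_dist P g z x * QQ n c t z x W * log 2 (QQ n c t z x W / (bb n c t W z / PgY P g z)))
        = aa n c t x W z * ?F x W z" for x W
    proof -
      have px: "Pxz x z > 0" by (rule Pxz_pos)
      have e1: "PgY P g z * (Gz_dist P g z x * QQ n c t z x W) = aa n c t x W z"
        using px pg by (simp add: QQ_def Gz_dist_eq)
      have e2: "QQ n c t z x W / (bb n c t W z / PgY P g z) = aa n c t x W z / (Gz_dist P g z x * bb n c t W z)"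
      proof (cases "bb n c t W z = 0")
        case True then show ?thesis by simp
      next
        case False then show ?thesis using px pg by (simp add: QQ_def Gz_dist_eq field_simps)
      qed
      show ?thesis using e1 e2 by (simp add: mult.assoc[symmetric])
    qed
    have "PgY P g z * mutual_info (Gz_dist P g z) (QQ n c t z)
        = (\<Sum>x\<in>UNIV. \<Sum>W\<in>UNIV. PgY P g z * (Gz_dist P g z x * QQ n c t z x W * log 2 (QQ n c t z x W / (bb n c t W z / PgY P g z))))"
      unfolding mutual_info_def den by (simp add: sum_distrib_left)
    also have "\<dots> = (\<Sum>x\<in>UNIV. \<Sum>W\<in>UNIV. aa n c t x W z * ?F x W z)"
      by (rule sum.cong[OF refl], rule sum.cong[OF refl], rule tm)
    finally show "(\<Sum>x\<in>UNIV. \<Sum>W\<in>UNIV. aa n c t x W z * ?F x W z) = PgY P g z * mutual_info (Gz_dist P g z) (QQ n c t z)"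
      by simp
  qed
  finally show ?thesis .
qed

definition KK :: real where
  "KK = (\<Sum>z\<in>UNIV. PgY P g z * korner_entropy (Gz_adj P f g z) (Gz_dist P g z))"

lemma lower:
  assumes proper: "\<forall>v\<in>verts n. \<forall>w\<in>verts n. char_adj P f g n v w \<longrightarrow> c v \<noteq> c w"
  shows "entropy_of (pcol n c) (c ` verts n) \<ge> real n * KK"
proof -
  have "real n * KK = (\<Sum>t<n. KK)" by simp
  also have "\<dots> \<le> (\<Sum>t<n. \<Sum>z\<in>UNIV. PgY P g z * mutual_info (Gz_dist P g z) (QQ n c t z))"
    unfolding KK_def
  proof (intro sum_mono mult_left_mono)
    fix t z assume "t \<in> {..<n}"
    then show "korner_entropy (Gz_adj P f g z) (Gz_dist P g z) \<le> mutual_info (Gz_dist P g z) (QQ n c t z)"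
      using QQ_adm[OF _ proper] by (intro korner_le) (auto simp: Gz_dist_pos sum_Gz_dist)
    show "0 \<le> PgY P g z" using PgY_pos[of z] by simp
  qed
  also have "\<dots> = (\<Sum>t<n. \<Sum>v\<in>verts n. mu v * LL n c t v)"
    by (intro sum.cong refl LL_sum[symmetric]) simp
  also have "\<dots> \<le> entropy_of (pcol n c) (c ` verts n)" by (rule H_ge)
  finally show ?thesis .
qed

end

lemma weighted_count:
  fixes w :: "'b \<Rightarrow> real"
  assumes "finite U" "finite Fam"
  shows "(\<Sum>S\<in>Fam. w S * real (card (U \<inter> mem S))) = (\<Sum>u\<in>U. \<Sum>S\<in>{S\<in>Fam. u \<in> mem S}. w S)"
proof -
  have c: "real (card (U \<inter> mem S)) = (\<Sum>u\<in>U. if u \<in> mem S then 1 else 0)" for S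
  proof -
    have "U \<inter> mem S = {u\<in>U. u \<in> mem S}" by blast
    then show ?thesis using assms(1) by (simp add: sum.inter_filter[symmetric])
  qed
  have "(\<Sum>S\<in>Fam. w S * real (card (U \<inter> mem S))) = (\<Sum>S\<in>Fam. \<Sum>u\<in>U. if u \<in> mem S then w S else 0)"
    unfolding c by (simp add: sum_distrib_left if_distrib cong: if_cong)
  also have "\<dots> = (\<Sum>u\<in>U. \<Sum>S\<in>Fam. if u \<in> mem S then w S else 0)" by (rule sum.swap)
  also have "\<dots> = (\<Sum>u\<in>U. \<Sum>S\<in>{S\<in>Fam. u \<in> mem S}. w S)"
    using assms(2) by (simp add: sum.inter_filter)
  finally show ?thesis .
qed

lemma greedy_cover:
  fixes w :: "'b \<Rightarrow> real" and mem :: "'b \<Rightarrow> 'a set"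
  assumes fF: "finite Fam" and wn: "\<forall>S\<in>Fam. w S \<ge> 0" and wT: "sum w Fam \<le> T"
  shows "finite U \<Longrightarrow> U \<noteq> {} \<Longrightarrow> (\<forall>u\<in>U. (\<Sum>S\<in>{S\<in>Fam. u \<in> mem S}. w S) \<ge> 1) \<Longrightarrow>
     \<exists>L. set L \<subseteq> Fam \<and> U \<subseteq> (\<Union>S\<in>set L. mem S) \<and> real (length L) \<le> T * (1 + ln (real (card U)))"
proof (induction "card U" arbitrary: U rule: less_induct)
  case less
  note fU = less.prems(1) and ne = less.prems(2) and cov = less.prems(3)
  obtain u0 where u0: "u0 \<in> U" using ne by blast
  have "1 \<le> (\<Sum>S\<in>{S\<in>Fam. u0 \<in> mem S}. w S)" using cov u0 by blast
  also have "\<dots> \<le> sum w Fam" by (rule sum_mono2) (use fF wn in auto)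
  finally have T1: "T \<ge> 1" using wT by simp
  have cU: "card U \<ge> 1" using fU ne by (simp add: Suc_le_eq card_gt_0_iff)
  let ?F = "{S\<in>Fam. w S > 0}"
  have "?F \<noteq> {}"
  proof
    assume e: "?F = {}"
    then have "\<forall>S\<in>Fam. w S = 0" using wn by force
    then have "(\<Sum>S\<in>{S\<in>Fam. u0 \<in> mem S}. w S) = 0" by simp
    then show False using cov u0 by fastforce
  qed
  have fFp: "finite ?F" using fF by simp
  define M where "M = Max ((\<lambda>S. card (U \<inter> mem S)) ` ?F)"
  have "M \<in> (\<lambda>S. card (U \<inter> mem S)) ` ?F" unfolding M_def using fFp \<open>?F \<noteq> {}\<close> by (intro Max_in) auto
  then obtain S where S: "S \<in> ?F" and SM: "card (U \<inter> mem S) = M" by blast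
  have Smax: "card (U \<inter> mem S') \<le> M" if "S' \<in> ?F" for S'
    unfolding M_def using fFp that by (intro Max_ge) auto
  have "real (card U) \<le> (\<Sum>u\<in>U. \<Sum>S\<in>{S\<in>Fam. u \<in> mem S}. w S)"
    using cov by (metis (no_types, lifting) sum_mono card_eq_sum of_nat_sum of_nat_1)
  also have "\<dots> = (\<Sum>S\<in>Fam. w S * real (card (U \<inter> mem S)))"
    by (rule weighted_count[symmetric]) (use fU fF in auto)
  also have "\<dots> \<le> (\<Sum>S\<in>Fam. w S * real M)"
  proof (rule sum_mono)
    fix S' assume S': "S' \<in> Fam"
    show "w S' * real (card (U \<inter> mem S')) \<le> w S' * real M"
    proof (cases "w S' > 0")
      case True then show ?thesis using Smax[of S'] S' by (intro mult_left_mono) auto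
    next
      case False then have "w S' = 0" using wn S' by force
      then show ?thesis by simp
    qed
  qed
  also have "\<dots> = sum w Fam * real M" by (simp add: sum_distrib_right)
  also have "\<dots> \<le> T * real M" using wT by (intro mult_right_mono) auto
  finally have CM: "real (card U) \<le> T * real M" .
  define U' where "U' = U - mem S"
  have fU': "finite U'" using fU unfolding U'_def by simp
  have cardU': "card U' = card U - M" unfolding U'_def SM[symmetric]
    using fU by (metis card_Diff_subset_Int finite_Int inf_commute Diff_Int2 Diff_Diff_Int)
  have MleU: "M \<le> card U" unfolding SM[symmetric] using fU by (intro card_mono) auto
  have Mpos: "M > 0"
  proof -
    have "real (card U) > 0" using cU by simp
    then have "T * real M > 0" using CM by linarith
    then show ?thesis using T1 by (simp add: zero_less_mult_iff)
  qed
  have SF: "S \<in> Fam" using S by simp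
  show ?case
  proof (cases "U' = {}")
    case True
    have "U \<subseteq> mem S" using True unfolding U'_def by blast
    moreover have "real (length [S]) \<le> T * (1 + ln (real (card U)))"
      using T1 cU by (simp add: ln_ge_zero_iff) (smt (verit) T1 ln_ge_zero mult_le_cancel_left1 of_nat_1 of_nat_mono cU)
    ultimately show ?thesis using SF by (intro exI[of _ "[S]"]) auto
  next
    case False
    have lt: "card U' < card U" using cardU' Mpos MleU cU by simp
    have cov': "\<forall>u\<in>U'. (\<Sum>S\<in>{S\<in>Fam. u \<in> mem S}. w S) \<ge> 1" using cov unfolding U'_def by blast
    obtain L' where L': "set L' \<subseteq> Fam" "U' \<subseteq> (\<Union>S\<in>set L'. mem S)"
      "real (length L') \<le> T * (1 + ln (real (card U')))"
      using less.hyps[OF lt fU' False cov'] by blast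
    have cU'pos: "card U' \<ge> 1" using fU' False by (simp add: Suc_le_eq card_gt_0_iff)
    have rc: "real (card U') = real (card U) - real M" using cardU' MleU by simp
    have a: "T * real (card U') \<le> T * (real (card U) * (1 - 1/T))"
    proof -
      have "T * real (card U') = T * real (card U) - T * real M" unfolding rc by (simp add: right_diff_distrib)
      also have "\<dots> \<le> T * real (card U) - real (card U)" using CM by simp
      also have "\<dots> = T * (real (card U) * (1 - 1/T))" using T1 by (simp add: field_simps)
      finally show ?thesis .
    qed
    have rc2: "real (card U') \<le> real (card U) * (1 - 1/T)"
      using a T1 by (simp add: mult_le_cancel_left_pos)
    have pos1: "1 - 1/T > 0"
    proof -
      have "0 < real (card U')" using cU'pos by simp
      also have "\<dots> \<le> real (card U) * (1 - 1/T)" by (rule rc2)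
      finally show ?thesis using cU by (simp add: zero_less_mult_iff)
    qed
    have "ln (real (card U')) \<le> ln (real (card U) * (1 - 1/T))"
      using rc2 cU'pos by (intro ln_mono) auto
    also have "\<dots> = ln (real (card U)) + ln (1 - 1/T)"
      using cU pos1 by (intro ln_mult_pos) auto
    also have "ln (1 - 1/T) \<le> (1 - 1/T) - 1" using pos1 by (intro ln_le_minus_one)
    finally have lnb: "ln (real (card U')) \<le> ln (real (card U)) - 1/T" by simp
    have "real (length (S # L')) = 1 + real (length L')" by simp
    also have "\<dots> \<le> 1 + T * (1 + ln (real (card U')))" using L' by simp
    also have "\<dots> \<le> 1 + T * (1 + ln (real (card U)) - 1/T)"
      using lnb T1 by (intro add_left_mono mult_left_mono) auto
    also have "\<dots> = T * (1 + ln (real (card U)))" using T1 by (simp add: field_simps)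
    finally have len: "real (length (S # L')) \<le> T * (1 + ln (real (card U)))" .
    have "U \<subseteq> (\<Union>S'\<in>set (S # L'). mem S')" using L'(2) unfolding U'_def by auto
    then show ?thesis using len L'(1) SF by (intro exI[of _ "S # L'"]) auto
  qed
qed


context LS begin

definition rr :: "('z \<Rightarrow> 'x \<Rightarrow> 'x set \<Rightarrow> real) \<Rightarrow> 'z \<Rightarrow> 'x set \<Rightarrow> real" where
  "rr Q z W = (\<Sum>x\<in>UNIV. Gz_dist P g z x * Q z x W)"
definition pp :: "('z \<Rightarrow> 'x \<Rightarrow> 'x set \<Rightarrow> real) \<Rightarrow> 'z \<Rightarrow> 'x \<Rightarrow> real" where
  "pp Q z x = (\<Sum>W\<in>{W. x \<in> W}. rr Q z W)"

definition admQ :: "('z \<Rightarrow> 'x \<Rightarrow> 'x set \<Rightarrow> real) \<Rightarrow> bool" where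
  "admQ Q \<longleftrightarrow> (\<forall>z. admissible_cond (Gz_adj P f g z) (Q z))"

lemma admQ_nonneg: "admQ Q \<Longrightarrow> Q z x W \<ge> 0" by (simp add: admQ_def admissible_cond_def)
lemma admQ_sum: "admQ Q \<Longrightarrow> (\<Sum>W\<in>UNIV. Q z x W) = 1" by (simp add: admQ_def admissible_cond_def)
lemma admQ_pos: "admQ Q \<Longrightarrow> Q z x W > 0 \<Longrightarrow> x \<in> W \<and> indep_set (Gz_adj P f g z) W"
  by (simp add: admQ_def admissible_cond_def)

lemma rr_nonneg: "admQ Q \<Longrightarrow> rr Q z W \<ge> 0"
  unfolding rr_def using Gz_dist_pos by (intro sum_nonneg mult_nonneg_nonneg admQ_nonneg less_imp_le) auto

lemma rr_ge: "admQ Q \<Longrightarrow> rr Q z W \<ge> Gz_dist P g z x * Q z x W"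
  unfolding rr_def using Gz_dist_pos
  by (intro member_le_sum mult_nonneg_nonneg admQ_nonneg less_imp_le) auto

lemma sum_rr: "admQ Q \<Longrightarrow> (\<Sum>W\<in>UNIV. rr Q z W) = 1"
  unfolding rr_def by (subst sum.swap) (simp add: sum_distrib_left[symmetric] admQ_sum sum_Gz_dist)

lemma rr_pos_indep: "admQ Q \<Longrightarrow> rr Q z W > 0 \<Longrightarrow> indep_set (Gz_adj P f g z) W"
proof -
  assume a: "admQ Q" "rr Q z W > 0"
  have "\<exists>x. Q z x W > 0"
  proof (rule ccontr)
    assume "\<not> (\<exists>x. Q z x W > 0)"
    then have "\<forall>x. Q z x W = 0" using admQ_nonneg[OF a(1)] by (metis order_less_le)
    then have "rr Q z W = 0" unfolding rr_def by simp
    then show False using a by simp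
  qed
  then show ?thesis using admQ_pos[OF a(1)] by blast
qed

lemma pp_le1: "admQ Q \<Longrightarrow> pp Q z x \<le> 1"
proof -
  assume a: "admQ Q"
  have "pp Q z x \<le> (\<Sum>W\<in>UNIV. rr Q z W)" unfolding pp_def
    by (rule sum_mono2) (auto simp: rr_nonneg[OF a])
  then show ?thesis using sum_rr[OF a] by simp
qed

lemma pp_pos: "admQ Q \<Longrightarrow> pp Q z x > 0"
proof -
  assume a: "admQ Q"
  obtain W where W: "Q z x W > 0"
  proof (rule ccontr)
    assume "\<not> thesis"
    then have "\<forall>W. Q z x W \<le> 0" using that by (metis not_le)
    then have "\<forall>W. Q z x W = 0" using admQ_nonneg[OF a] by (metis order_antisym)
    then show False using admQ_sum[OF a, of z x] by simp
  qed
  have xW: "x \<in> W" using admQ_pos[OF a W] by blast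
  have "0 < Gz_dist P g z x * Q z x W" using W Gz_dist_pos by simp
  also have "\<dots> \<le> rr Q z W" by (rule rr_ge[OF a])
  finally have "rr Q z W > 0" .
  then show ?thesis unfolding pp_def using xW
    by (intro sum_pos2[of _ W]) (auto simp: rr_nonneg[OF a])
qed

lemma jensen_x:
  assumes a: "admQ Q"
  shows "- log 2 (pp Q z x) \<le> (\<Sum>W\<in>UNIV. Q z x W * log 2 (Q z x W / rr Q z W))"
proof -
  let ?S = "{W. Q z x W > 0}"
  let ?p = "(\<Sum>W\<in>?S. rr Q z W)"
  have rpos: "rr Q z W > 0" if "W \<in> ?S" for W
  proof -
    have "0 < Gz_dist P g z x * Q z x W" using that Gz_dist_pos by simp
    also have "\<dots> \<le> rr Q z W" by (rule rr_ge[OF a])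
    finally show ?thesis .
  qed
  have Sne: "?S \<noteq> {}"
  proof
    assume "?S = {}"
    then have "\<forall>W. Q z x W = 0" using admQ_nonneg[OF a] by (metis empty_iff mem_Collect_eq order_less_le)
    then show False using admQ_sum[OF a, of z x] by simp
  qed
  have ppos: "?p > 0" using Sne rpos by (intro sum_pos) auto
  have sumS: "(\<Sum>W\<in>?S. Q z x W) = 1"
  proof -
    have "(\<Sum>W\<in>?S. Q z x W) = (\<Sum>W\<in>UNIV. Q z x W)"
      by (rule sum.mono_neutral_left) (use admQ_nonneg[OF a] in \<open>auto simp: order_less_le\<close>)
    then show ?thesis using admQ_sum[OF a] by simp
  qed
  have "0 \<le> (\<Sum>W\<in>?S. Q z x W * log 2 (Q z x W / (rr Q z W / ?p)))"
  proof (rule gibbs)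
    show "\<forall>i\<in>?S. 0 < rr Q z i / ?p" using rpos ppos by simp
    have "(\<Sum>i\<in>?S. rr Q z i / ?p) = 1" using ppos by (simp add: sum_divide_distrib[symmetric])
    then show "(\<Sum>i\<in>?S. rr Q z i / ?p) \<le> (\<Sum>i\<in>?S. Q z x i)" using sumS by simp
  qed auto
  also have "\<dots> = (\<Sum>W\<in>?S. Q z x W * log 2 (Q z x W / rr Q z W)) + (\<Sum>W\<in>?S. Q z x W) * log 2 ?p"
  proof -
    have "Q z x W * log 2 (Q z x W / (rr Q z W / ?p)) = Q z x W * log 2 (Q z x W / rr Q z W) + Q z x W * log 2 ?p"
      if "W \<in> ?S" for W
    proof -
      have "Q z x W / (rr Q z W / ?p) = (Q z x W / rr Q z W) * ?p" using ppos rpos[OF that] by simp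
      moreover have "log 2 ((Q z x W / rr Q z W) * ?p) = log 2 (Q z x W / rr Q z W) + log 2 ?p"
        using that rpos[OF that] ppos by (intro log2_mult_pos) auto
      ultimately have "log 2 (Q z x W / (rr Q z W / ?p)) = log 2 (Q z x W / rr Q z W) + log 2 ?p"
        by simp
      then show ?thesis by (simp add: distrib_left)
    qed
    then show ?thesis by (simp add: sum.distrib sum_distrib_right)
  qed
  finally have i1: "- log 2 ?p \<le> (\<Sum>W\<in>?S. Q z x W * log 2 (Q z x W / rr Q z W))" using sumS by simp
  have "?p \<le> pp Q z x" unfolding pp_def
    by (rule sum_mono2) (use admQ_pos[OF a] rr_nonneg[OF a] in auto)
  then have "log 2 ?p \<le> log 2 (pp Q z x)" using ppos by simp
  moreover have "(\<Sum>W\<in>?S. Q z x W * log 2 (Q z x W / rr Q z W)) = (\<Sum>W\<in>UNIV. Q z x W * log 2 (Q z x W / rr Q z W))"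
    by (rule sum.mono_neutral_left) (use admQ_nonneg[OF a] in \<open>auto simp: order_less_le\<close>)
  ultimately show ?thesis using i1 by simp
qed

lemma jensen:
  assumes a: "admQ Q"
  shows "(\<Sum>x\<in>UNIV. Gz_dist P g z x * (- log 2 (pp Q z x))) \<le> mutual_info (Gz_dist P g z) (Q z)"
proof -
  have "(\<Sum>x\<in>UNIV. Gz_dist P g z x * (- log 2 (pp Q z x)))
     \<le> (\<Sum>x\<in>UNIV. Gz_dist P g z x * (\<Sum>W\<in>UNIV. Q z x W * log 2 (Q z x W / rr Q z W)))"
    using Gz_dist_pos jensen_x[OF a] by (intro sum_mono mult_left_mono) (auto simp: less_imp_le)
  also have "\<dots> = mutual_info (Gz_dist P g z) (Q z)"
    unfolding mutual_info_def rr_def by (simp add: sum_distrib_left mult.assoc)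
  finally show ?thesis .
qed

end

context LS begin

definition ell :: "('z \<Rightarrow> 'x \<Rightarrow> 'x set \<Rightarrow> real) \<Rightarrow> nat \<Rightarrow> 'x list \<times> 'z list \<Rightarrow> real" where
  "ell Q n v = (\<Sum>t<n. - log 2 (pp Q (snd v!t) (fst v!t)))"
definition Pi :: "('z \<Rightarrow> 'x \<Rightarrow> 'x set \<Rightarrow> real) \<Rightarrow> nat \<Rightarrow> 'x list \<times> 'z list \<Rightarrow> real" where
  "Pi Q n v = (\<Prod>t<n. pp Q (snd v!t) (fst v!t))"
definition jj :: "('z \<Rightarrow> 'x \<Rightarrow> 'x set \<Rightarrow> real) \<Rightarrow> nat \<Rightarrow> 'x list \<times> 'z list \<Rightarrow> nat" where
  "jj Q n v = nat \<lfloor>ell Q n v\<rfloor>"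
definition BB :: "('z \<Rightarrow> 'x \<Rightarrow> 'x set \<Rightarrow> real) \<Rightarrow> real" where
  "BB Q = (\<Sum>z\<in>UNIV. \<Sum>x\<in>UNIV. - log 2 (pp Q z x))"

lemma Pi_pos: "admQ Q \<Longrightarrow> Pi Q n v > 0"
  unfolding Pi_def by (intro prod_pos) (simp add: pp_pos)

lemma ell_eq: "admQ Q \<Longrightarrow> ell Q n v = - log 2 (Pi Q n v)"
proof -
  assume a: "admQ Q"
  have "log 2 (Pi Q n v) = (\<Sum>t<n. log 2 (pp Q (snd v!t) (fst v!t)))"
    unfolding Pi_def
  proof (rule log2_prod)
    fix t show "pp Q (snd v!t) (fst v!t) \<noteq> 0" using pp_pos[OF a, of "snd v!t" "fst v!t"] by linarith
  qed simp
  then show ?thesis unfolding ell_def by (simp add: sum_negf)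
qed

lemma mlog_pp_nonneg: "admQ Q \<Longrightarrow> - log 2 (pp Q z x) \<ge> 0"
  using pp_pos[of Q z x] pp_le1[of Q z x] by simp

lemma log_pp_le0: "admQ Q \<Longrightarrow> log 2 (pp Q z x) \<le> 0"
  using mlog_pp_nonneg[of Q z x] by simp

lemma ell_nonneg: "admQ Q \<Longrightarrow> ell Q n v \<ge> 0"
  unfolding ell_def by (intro sum_nonneg) (simp add: log_pp_le0)

lemma BB_ge: "admQ Q \<Longrightarrow> - log 2 (pp Q z x) \<le> BB Q"
proof -
  assume a: "admQ Q"
  have "- log 2 (pp Q z x) \<le> (\<Sum>x\<in>UNIV. - log 2 (pp Q z x))"
    by (rule member_le_sum) (auto simp: log_pp_le0[OF a])
  also have "\<dots> \<le> BB Q" unfolding BB_def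
    by (rule member_le_sum[of z UNIV "\<lambda>z. \<Sum>x\<in>UNIV. - log 2 (pp Q z x)"])
       (auto intro!: sum_nonneg simp: log_pp_le0[OF a])
  finally show ?thesis .
qed

lemma BB_nonneg: "admQ Q \<Longrightarrow> BB Q \<ge> 0"
  using BB_ge[of Q undefined undefined] mlog_pp_nonneg[of Q undefined undefined] by linarith

lemma ell_le: "admQ Q \<Longrightarrow> ell Q n v \<le> real n * BB Q"
proof -
  assume a: "admQ Q"
  have "ell Q n v \<le> (\<Sum>t<n. BB Q)" unfolding ell_def by (intro sum_mono BB_ge[OF a])
  then show ?thesis by simp
qed

lemma jj_le: "admQ Q \<Longrightarrow> real (jj Q n v) \<le> ell Q n v"
  unfolding jj_def using ell_nonneg[of Q n v] by simp

lemma Pi_gt: "admQ Q \<Longrightarrow> 1 < 2 ^ (jj Q n v + 1) * Pi Q n v"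
proof -
  assume a: "admQ Q"
  have e0: "ell Q n v \<ge> 0" by (rule ell_nonneg[OF a])
  have lt: "ell Q n v < real (jj Q n v) + 1"
  proof -
    have f0: "\<lfloor>ell Q n v\<rfloor> \<ge> 0" using e0 by simp
    have "real (jj Q n v) = real_of_int \<lfloor>ell Q n v\<rfloor>" unfolding jj_def using f0 by simp
    moreover have "ell Q n v < real_of_int (\<lfloor>ell Q n v\<rfloor> + 1)" using floor_correct[of "ell Q n v"] by blast
    ultimately show ?thesis by simp
  qed
  have pos: "Pi Q n v > 0" by (rule Pi_pos[OF a])
  have "Pi Q n v = 2 powr (log 2 (Pi Q n v))" using pos by simp
  also have "\<dots> = 2 powr (- ell Q n v)" by (simp add: ell_eq[OF a])
  moreover have "(2::real) ^ (jj Q n v + 1) = 2 powr (real (jj Q n v + 1))"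
    by (rule powr_realpow[symmetric]) simp
  ultimately have "2 ^ (jj Q n v + 1) * Pi Q n v = 2 powr (real (jj Q n v + 1)) * 2 powr (- ell Q n v)"
    by simp
  also have "\<dots> = 2 powr (real (jj Q n v + 1) - ell Q n v)" by (simp add: powr_add[symmetric])
  also have "\<dots> > 1" using lt by (intro gr_one_powr) auto
  finally show ?thesis .
qed

lemma E_ell:
  assumes a: "admQ Q"
  shows "(\<Sum>v\<in>verts n. mu v * ell Q n v) = real n * (\<Sum>z\<in>UNIV. PgY P g z * (\<Sum>x\<in>UNIV. Gz_dist P g z x * (- log 2 (pp Q z x))))"
proof -
  let ?phi = "\<lambda>x z. - log 2 (pp Q z x)"
  have one: "(\<Sum>v\<in>verts n. mu v * ?phi (fst v!t) (snd v!t)) = (\<Sum>z\<in>UNIV. PgY P g z * (\<Sum>x\<in>UNIV. Gz_dist P g z x * ?phi x z))"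
    if t: "t < n" for t
  proof -
    have "(\<Sum>v\<in>verts n. mu v * ?phi (fst v!t) (snd v!t))
        = (\<Sum>k\<in>UNIV. \<Sum>v\<in>{v\<in>verts n. (fst v!t, snd v!t) = k}. mu v * ?phi (fst v!t) (snd v!t))"
      by (rule sum.group[symmetric]) (auto simp: finite_verts)
    also have "\<dots> = (\<Sum>k\<in>UNIV. Pxz (fst k) (snd k) * ?phi (fst k) (snd k))"
    proof (rule sum.cong[OF refl])
      fix k :: "'x \<times> 'z"
      obtain x z where k: "k = (x, z)" by (cases k)
      have "(\<Sum>v\<in>{v\<in>verts n. (fst v!t, snd v!t) = k}. mu v * ?phi (fst v!t) (snd v!t))
          = (\<Sum>v\<in>{v\<in>verts n. fst v!t = x \<and> snd v!t = z}. mu v) * ?phi x z"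
        unfolding k by (simp add: sum_distrib_right sum_negf)
      also have "\<dots> = Pxz x z * ?phi x z" using marg[OF t] by simp
      finally show "(\<Sum>v\<in>{v\<in>verts n. (fst v!t, snd v!t) = k}. mu v * ?phi (fst v!t) (snd v!t))
          = Pxz (fst k) (snd k) * ?phi (fst k) (snd k)" using k by simp
    qed
    also have "\<dots> = (\<Sum>x\<in>UNIV. \<Sum>z\<in>UNIV. Pxz x z * ?phi x z)" by (simp add: sum_UNIV_pair)
    also have "\<dots> = (\<Sum>z\<in>UNIV. \<Sum>x\<in>UNIV. Pxz x z * ?phi x z)" by (rule sum.swap)
    also have "\<dots> = (\<Sum>z\<in>UNIV. PgY P g z * (\<Sum>x\<in>UNIV. Gz_dist P g z x * ?phi x z))"
    proof (rule sum.cong[OF refl])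
      fix z have "PgY P g z \<noteq> 0" using PgY_pos[of z] by simp
      then show "(\<Sum>x\<in>UNIV. Pxz x z * ?phi x z) = PgY P g z * (\<Sum>x\<in>UNIV. Gz_dist P g z x * ?phi x z)"
        by (simp add: sum_distrib_left Gz_dist_eq)
    qed
    finally show ?thesis .
  qed
  have "(\<Sum>v\<in>verts n. mu v * ell Q n v) = (\<Sum>t<n. \<Sum>v\<in>verts n. mu v * ?phi (fst v!t) (snd v!t))"
    unfolding ell_def by (simp add: sum_distrib_left sum.swap[of _ "{..<n}"])
  also have "\<dots> = (\<Sum>t<n. (\<Sum>z\<in>UNIV. PgY P g z * (\<Sum>x\<in>UNIV. Gz_dist P g z x * ?phi x z)))"
    by (intro sum.cong refl one) simp
  finally show ?thesis by simp
qed

end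

context LS begin

definition Fam :: "('z \<Rightarrow> 'x \<Rightarrow> 'x set \<Rightarrow> real) \<Rightarrow> nat \<Rightarrow> 'z list \<Rightarrow> 'x set list set" where
  "Fam Q n zs = {Ws. length Ws = n \<and> (\<forall>t<n. Ws!t \<in> {W. rr Q (zs!t) W > 0})}"
definition memb :: "nat \<Rightarrow> 'x set list \<Rightarrow> 'x list set" where
  "memb n Ws = {xs. length xs = n \<and> (\<forall>t<n. xs!t \<in> Ws!t)}"
definition om :: "('z \<Rightarrow> 'x \<Rightarrow> 'x set \<Rightarrow> real) \<Rightarrow> nat \<Rightarrow> 'z list \<Rightarrow> 'x set list \<Rightarrow> real" where
  "om Q n zs Ws = (\<Prod>t<n. rr Q (zs!t) (Ws!t))"
definition UU :: "('z \<Rightarrow> 'x \<Rightarrow> 'x set \<Rightarrow> real) \<Rightarrow> nat \<Rightarrow> 'z list \<Rightarrow> nat \<Rightarrow> 'x list set" where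
  "UU Q n zs j = {xs. length xs = n \<and> jj Q n (xs, zs) = j}"
definition Mj :: "nat \<Rightarrow> nat \<Rightarrow> real" where
  "Mj n j = 2 ^ (j + 1) * (1 + real n * ln (real (card (UNIV::'x set))))"

lemma card_x_ge1: "card (UNIV::'x set) \<ge> 1"
  by (simp add: Suc_le_eq card_gt_0_iff)

lemma Mj_nonneg: "Mj n j \<ge> 0"
proof -
  have "ln (real (card (UNIV::'x set))) \<ge> 0" using card_x_ge1 by simp
  then show ?thesis unfolding Mj_def by (intro mult_nonneg_nonneg add_nonneg_nonneg) auto
qed

lemma finite_Fam: "finite (Fam Q n zs)"
  unfolding Fam_def by (rule finite_lists_A)

lemma sum_rr_pos: "admQ Q \<Longrightarrow> (\<Sum>W\<in>{W. rr Q z W > 0}. rr Q z W) = 1"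
proof -
  assume a: "admQ Q"
  have "(\<Sum>W\<in>{W. rr Q z W > 0}. rr Q z W) = (\<Sum>W\<in>UNIV. rr Q z W)"
    by (rule sum.mono_neutral_left) (use rr_nonneg[OF a] in \<open>auto simp: order_less_le\<close>)
  then show ?thesis using sum_rr[OF a] by simp
qed

lemma sum_om: "admQ Q \<Longrightarrow> (\<Sum>Ws\<in>Fam Q n zs. om Q n zs Ws) = 1"
proof -
  assume a: "admQ Q"
  have "(\<Sum>Ws\<in>Fam Q n zs. om Q n zs Ws) = (\<Prod>t<n. \<Sum>W\<in>{W. rr Q (zs!t) W > 0}. rr Q (zs!t) W)"
    unfolding Fam_def om_def by (rule sum_prod_lists)
  then show ?thesis by (simp add: sum_rr_pos[OF a])
qed

lemma cover_weight:
  assumes a: "admQ Q" and l: "length xs = n"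
  shows "(\<Sum>Ws\<in>{Ws\<in>Fam Q n zs. xs \<in> memb n Ws}. om Q n zs Ws) = Pi Q n (xs, zs)"
proof -
  have se: "{Ws\<in>Fam Q n zs. xs \<in> memb n Ws} = {Ws. length Ws = n \<and> (\<forall>t<n. Ws!t \<in> {W. rr Q (zs!t) W > 0 \<and> xs!t \<in> W})}"
    unfolding Fam_def memb_def using l by auto
  have "(\<Sum>Ws\<in>{Ws\<in>Fam Q n zs. xs \<in> memb n Ws}. om Q n zs Ws)
      = (\<Prod>t<n. \<Sum>W\<in>{W. rr Q (zs!t) W > 0 \<and> xs!t \<in> W}. rr Q (zs!t) W)"
    unfolding om_def se by (rule sum_prod_lists)
  also have "\<dots> = (\<Prod>t<n. pp Q (zs!t) (xs!t))"
  proof (rule prod.cong[OF refl])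
    fix t
    show "(\<Sum>W\<in>{W. rr Q (zs!t) W > 0 \<and> xs!t \<in> W}. rr Q (zs!t) W) = pp Q (zs!t) (xs!t)"
      unfolding pp_def
      by (rule sum.mono_neutral_left) (use rr_nonneg[OF a] in \<open>auto simp: order_less_le\<close>)
  qed
  finally show ?thesis unfolding Pi_def by simp
qed

lemma card_UU: "card (UU Q n zs j) \<le> (card (UNIV::'x set)) ^ n"
proof -
  have "card (UU Q n zs j) \<le> card {xs::'x list. set xs \<subseteq> UNIV \<and> length xs = n}"
    by (rule card_mono) (auto simp: UU_def finite_len)
  also have "\<dots> = (card (UNIV::'x set)) ^ n" by (rule card_lists_length_eq) simp
  finally show ?thesis .
qed

lemma cov_exists:
  assumes a: "admQ Q"
  shows "\<exists>L. set L \<subseteq> Fam Q n zs \<and> UU Q n zs j \<subseteq> (\<Union>Ws\<in>set L. memb n Ws) \<and> real (length L) \<le> Mj n j"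
proof (cases "UU Q n zs j = {}")
  case True
  then show ?thesis using Mj_nonneg by (intro exI[of _ "[]"]) auto
next
  case False
  let ?T = "(2::real) ^ (j + 1)"
  let ?w = "\<lambda>Ws. ?T * om Q n zs Ws"
  have wn: "\<forall>S\<in>Fam Q n zs. ?w S \<ge> 0"
    unfolding om_def using rr_nonneg[OF a] by (auto intro!: mult_nonneg_nonneg prod_nonneg)
  have wT: "sum ?w (Fam Q n zs) \<le> ?T" by (simp add: sum_distrib_left[symmetric] sum_om[OF a])
  have fU: "finite (UU Q n zs j)" unfolding UU_def by (rule finite_lists_A)
  have cov: "\<forall>u\<in>UU Q n zs j. (\<Sum>S\<in>{S\<in>Fam Q n zs. u \<in> memb n S}. ?w S) \<ge> 1"
  proof
    fix u assume u: "u \<in> UU Q n zs j"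
    then have l: "length u = n" and jv: "jj Q n (u, zs) = j" unfolding UU_def by auto
    have "(\<Sum>S\<in>{S\<in>Fam Q n zs. u \<in> memb n S}. ?w S) = ?T * Pi Q n (u, zs)"
      by (simp add: sum_distrib_left[symmetric] cover_weight[OF a l])
    also have "\<dots> > 1" using Pi_gt[OF a, of n "(u,zs)"] jv by simp
    finally show "(\<Sum>S\<in>{S\<in>Fam Q n zs. u \<in> memb n S}. ?w S) \<ge> 1" by simp
  qed
  obtain L where L: "set L \<subseteq> Fam Q n zs" "UU Q n zs j \<subseteq> (\<Union>Ws\<in>set L. memb n Ws)"
    "real (length L) \<le> ?T * (1 + ln (real (card (UU Q n zs j))))"
    using greedy_cover[OF finite_Fam wn wT fU False cov] by blast
  have cpos: "card (UU Q n zs j) > 0" using fU False by (simp add: card_gt_0_iff)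
  have "ln (real (card (UU Q n zs j))) \<le> ln (real ((card (UNIV::'x set)) ^ n))"
    using card_UU[of Q n zs j] cpos card_x_ge1 by (subst ln_le_cancel_iff) auto
  also have "\<dots> = real n * ln (real (card (UNIV::'x set)))" by (simp add: ln_realpow)
  finally have "real (length L) \<le> Mj n j"
    using L(3) unfolding Mj_def by (smt (verit) mult_left_mono zero_le_power)
  then show ?thesis using L by blast
qed

definition Cov :: "('z \<Rightarrow> 'x \<Rightarrow> 'x set \<Rightarrow> real) \<Rightarrow> nat \<Rightarrow> 'z list \<Rightarrow> nat \<Rightarrow> 'x set list list" where
  "Cov Q n zs j = (SOME L. set L \<subseteq> Fam Q n zs \<and> UU Q n zs j \<subseteq> (\<Union>Ws\<in>set L. memb n Ws) \<and> real (length L) \<le> Mj n j)"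

lemma Cov_props:
  assumes a: "admQ Q"
  shows "set (Cov Q n zs j) \<subseteq> Fam Q n zs \<and> UU Q n zs j \<subseteq> (\<Union>Ws\<in>set (Cov Q n zs j). memb n Ws) \<and> real (length (Cov Q n zs j)) \<le> Mj n j"
  unfolding Cov_def by (rule someI_ex[OF cov_exists[OF a]])

definition kk :: "('z \<Rightarrow> 'x \<Rightarrow> 'x set \<Rightarrow> real) \<Rightarrow> nat \<Rightarrow> 'x list \<times> 'z list \<Rightarrow> nat" where
  "kk Q n v = (LEAST k. k < length (Cov Q n (snd v) (jj Q n v)) \<and> fst v \<in> memb n (Cov Q n (snd v) (jj Q n v) ! k))"

lemma kk_props:
  assumes a: "admQ Q" and v: "v \<in> verts n"
  shows "kk Q n v < length (Cov Q n (snd v) (jj Q n v)) \<and> fst v \<in> memb n (Cov Q n (snd v) (jj Q n v) ! kk Q n v)"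
proof -
  let ?L = "Cov Q n (snd v) (jj Q n v)"
  have "fst v \<in> UU Q n (snd v) (jj Q n v)" using v unfolding UU_def verts_def by (cases v) auto
  then have "fst v \<in> (\<Union>Ws\<in>set ?L. memb n Ws)" using Cov_props[OF a] by blast
  then obtain Ws where "Ws \<in> set ?L" "fst v \<in> memb n Ws" by blast
  then have "\<exists>k. k < length ?L \<and> fst v \<in> memb n (?L ! k)" by (metis in_set_conv_nth)
  then show ?thesis unfolding kk_def by (rule LeastI_ex)
qed

definition ctQ :: "('z \<Rightarrow> 'x \<Rightarrow> 'x set \<Rightarrow> real) \<Rightarrow> nat \<Rightarrow> 'x list \<Rightarrow> 'z list \<Rightarrow> nat" where
  "ctQ Q n xs zs = prod_encode (jj Q n (xs, zs), kk Q n (xs, zs))"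

lemma ctQ_proper:
  assumes a: "admQ Q"
  shows "Sn_coloring P f g n (ctQ Q n)"
  unfolding Sn_coloring_def
proof (intro ballI impI)
  fix v w assume v: "v \<in> verts n" and w: "w \<in> verts n" and adj: "char_adj P f g n v w"
  obtain xs zs where vv: "v = (xs, zs)" by (cases v)
  obtain xs' zs' where ww: "w = (xs', zs')" by (cases w)
  from adj have zeq: "zs' = zs" and ex: "\<exists>ys. length ys = n \<and> (\<forall>t<n. g (ys ! t) = zs ! t) \<and>
        (\<forall>t<n. P (xs ! t) (ys ! t) * P (xs' ! t) (ys ! t) > 0) \<and>
        (\<exists>t<n. f (xs ! t) (ys ! t) \<noteq> f (xs' ! t) (ys ! t))"
    unfolding char_adj_def vv ww by auto
  obtain ys t where ys: "length ys = n" "\<forall>t<n. g (ys ! t) = zs ! t"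
    "\<forall>t<n. P (xs ! t) (ys ! t) * P (xs' ! t) (ys ! t) > 0" and t: "t < n" "f (xs ! t) (ys ! t) \<noteq> f (xs' ! t) (ys ! t)"
    using ex by blast
  have pos: "P (xs ! t) (ys ! t) > 0 \<and> P (xs' ! t) (ys ! t) > 0"
    using ys(3) t(1) P_nonneg[of "xs!t" "ys!t"] P_nonneg[of "xs'!t" "ys!t"]
    by (metis mult_eq_0_iff order_less_le mult_zero_left)
  have gadj: "Gz_adj P f g (zs!t) (xs!t) (xs'!t)"
    unfolding Gz_adj_def using ys(2) t pos by blast
  show "(seq_type (snd v), ctQ Q n (fst v) (snd v)) \<noteq> (seq_type (snd w), ctQ Q n (fst w) (snd w))"
  proof
    assume "(seq_type (snd v), ctQ Q n (fst v) (snd v)) = (seq_type (snd w), ctQ Q n (fst w) (snd w))"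
    then have "ctQ Q n xs zs = ctQ Q n xs' zs" using vv ww zeq by simp
    then have jeq: "jj Q n v = jj Q n w" and keq: "kk Q n v = kk Q n w"
      unfolding ctQ_def using vv ww zeq by (simp_all add: prod_encode_eq)
    let ?L = "Cov Q n zs (jj Q n v)"
    have k1: "kk Q n v < length ?L" "xs \<in> memb n (?L ! kk Q n v)" using kk_props[OF a v] vv by auto
    have k2: "xs' \<in> memb n (?L ! kk Q n v)" using kk_props[OF a w] ww zeq jeq keq by auto
    have "?L ! kk Q n v \<in> Fam Q n zs" using Cov_props[OF a] k1(1) by (meson nth_mem subsetD)
    then have "rr Q (zs!t) ((?L ! kk Q n v) ! t) > 0" unfolding Fam_def using t(1) by simp
    then have ind: "indep_set (Gz_adj P f g (zs!t)) ((?L ! kk Q n v) ! t)" by (rule rr_pos_indep[OF a])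
    have "xs!t \<in> (?L ! kk Q n v) ! t" "xs'!t \<in> (?L ! kk Q n v) ! t"
      using k1(2) k2 t(1) unfolding memb_def by auto
    then show False using ind gadj unfolding indep_set_def by blast
  qed
qed

end

lemma card_seq_types: "card (seq_type ` {zs::'z::finite list. length zs = n}) \<le> (n + 1) ^ card (UNIV::'z set)"
proof -
  let ?H = "PiE (UNIV::'z set) (\<lambda>_. {..n})"
  let ?F = "\<lambda>h::'z \<Rightarrow> nat. \<lambda>a. real (h a) / real n"
  have sub: "seq_type ` {zs::'z list. length zs = n} \<subseteq> ?F ` ?H"
  proof
    fix T assume "T \<in> seq_type ` {zs::'z list. length zs = n}"
    then obtain zs where zs: "length zs = n" "T = seq_type zs" by blast
    let ?h = "\<lambda>a. card {t. t < length zs \<and> zs ! t = a}"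
    have "?h a \<le> n" for a
    proof -
      have "card {t. t < length zs \<and> zs ! t = a} \<le> card {..<n}" using zs(1) by (intro card_mono) auto
      then show ?thesis by simp
    qed
    then have hin: "?h \<in> ?H" by (simp add: PiE_UNIV_domain)
    have Teq: "T = ?F ?h" using zs unfolding seq_type_def by simp
    show "T \<in> ?F ` ?H" using image_eqI[where f="?F" and x="?h", OF Teq hin] .
  qed
  have "card (seq_type ` {zs::'z list. length zs = n}) \<le> card (?F ` ?H)"
    by (rule card_mono[OF _ sub]) (simp add: finite_PiE)
  also have "\<dots> \<le> card ?H" by (rule card_image_le) (simp add: finite_PiE)
  also have "\<dots> = (n + 1) ^ card (UNIV::'z set)" by (simp add: card_PiE)
  finally show ?thesis .
qed

lemma sum_wj: "(\<Sum>j\<le>J. 1 / (real (j+1) * real (j+2))) = 1 - 1 / real (J + 2)"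
proof (induction J)
  case 0 then show ?case by simp
next
  case (Suc J)
  have "(\<Sum>j\<le>Suc J. 1 / (real (j+1) * real (j+2))) = (1 - 1 / real (J + 2)) + 1 / (real (Suc J + 1) * real (Suc J + 2))"
    using Suc.IH by simp
  also have "\<dots> = 1 - 1 / real (Suc J + 2)"
  proof -
    have e: "real (Suc J + 1) = real J + 2" "real (Suc J + 2) = real J + 3" "real (J + 2) = real J + 2" by simp_all
    have p: "real J + 2 > 0" "real J + 3 > 0" by simp_all
    have q: "real J * real J \<ge> 0" "real J * 5 \<ge> 0" by simp_all
    have nz: "6 + (real J * real J + real J * 5) \<noteq> 0" using q by linarith
    have "(1 - 1 / (real J + 2)) + 1 / ((real J + 2) * (real J + 3)) = 1 - 1 / (real J + 3)"
    proof -
      have h: "1 / ((real J + 2) * (real J + 3)) = 1 / (real J + 2) - 1 / (real J + 3)"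
        using p by (simp add: field_simps)
      show ?thesis unfolding h by simp
    qed
    then show ?thesis unfolding e .
  qed
  finally show ?case .
qed

context LS begin

lemma gibbs_upper:
  assumes spos: "\<forall>col\<in>c ` verts n. s col > 0" and ssum: "(\<Sum>col\<in>c ` verts n. s col) \<le> 1"
  shows "entropy_of (pcol n c) (c ` verts n) \<le> (\<Sum>v\<in>verts n. mu v * (- log 2 (s (c v))))"
proof -
  have pp: "\<forall>col\<in>c ` verts n. pcol n c col > 0" using pcol_pos by blast
  have "0 \<le> (\<Sum>col\<in>c ` verts n. pcol n c col * log 2 (pcol n c col / s col))"
    using spos pp ssum sum_pcol[of n c] by (intro gibbs) (auto simp: finite_verts)
  also have "\<dots> = (\<Sum>col\<in>c ` verts n. pcol n c col * log 2 (pcol n c col)) - (\<Sum>col\<in>c ` verts n. pcol n c col * log 2 (s col))"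
    unfolding sum_subtractf[symmetric]
  proof (rule sum.cong[OF refl])
    fix col assume col: "col \<in> c ` verts n"
    have "log 2 (pcol n c col / s col) = log 2 (pcol n c col) - log 2 (s col)"
      using spos pp col by (intro log2_div_pos) auto
    then show "pcol n c col * log 2 (pcol n c col / s col) = pcol n c col * log 2 (pcol n c col) - pcol n c col * log 2 (s col)"
      by (simp add: right_diff_distrib)
  qed
  finally have i: "(\<Sum>col\<in>c ` verts n. pcol n c col * log 2 (s col)) \<le> (\<Sum>col\<in>c ` verts n. pcol n c col * log 2 (pcol n c col))"
    by simp
  have "(\<Sum>col\<in>c ` verts n. pcol n c col * log 2 (s col)) = (\<Sum>v\<in>verts n. mu v * log 2 (s (c v)))"
  proof -
    have "(\<Sum>col\<in>c ` verts n. pcol n c col * log 2 (s col))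
        = (\<Sum>col\<in>c ` verts n. \<Sum>v\<in>{v\<in>verts n. c v = col}. mu v * log 2 (s (c v)))"
      unfolding pcol_def by (intro sum.cong refl) (simp add: sum_distrib_right)
    also have "\<dots> = (\<Sum>v\<in>verts n. mu v * log 2 (s (c v)))"
      by (rule sum.group) (auto simp: finite_verts)
    finally show ?thesis .
  qed
  then show ?thesis using i unfolding entropy_of_def by (simp add: sum_negf)
qed

end

context LS begin

definition cQ :: "('z \<Rightarrow> 'x \<Rightarrow> 'x set \<Rightarrow> real) \<Rightarrow> nat \<Rightarrow> 'x list \<times> 'z list \<Rightarrow> ('z \<Rightarrow> real) \<times> nat" where
  "cQ Q n v = (seq_type (snd v), ctQ Q n (fst v) (snd v))"
definition kb :: "nat \<Rightarrow> nat \<Rightarrow> nat" where "kb n j = nat \<lfloor>Mj n j\<rfloor>"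
definition wj :: "nat \<Rightarrow> real" where "wj j = 1 / (real (j+1) * real (j+2))"
definition NT :: "nat \<Rightarrow> nat" where "NT n = card (seq_type ` {zs::'z list. length zs = n})"
definition sQ :: "nat \<Rightarrow> ('z \<Rightarrow> real) \<times> nat \<Rightarrow> real" where
  "sQ n col = wj (fst (prod_decode (snd col))) / (real (kb n (fst (prod_decode (snd col)))) * real (NT n))"
definition JJ :: "('z \<Rightarrow> 'x \<Rightarrow> 'x set \<Rightarrow> real) \<Rightarrow> nat \<Rightarrow> nat" where
  "JJ Q n = nat \<lfloor>real n * BB Q\<rfloor>"

lemma ln_card_nonneg: "ln (real (card (UNIV::'x set))) \<ge> 0" using card_x_ge1 by simp

lemma Mj_ge2: "Mj n j \<ge> 2"
proof -
  have "(2::real) ^ (j+1) \<ge> 2" by (metis one_le_numeral power_increasing le_add2 power_one_right)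
  moreover have "1 + real n * ln (real (card (UNIV::'x set))) \<ge> 1" using ln_card_nonneg by simp
  ultimately have "(2::real) ^ (j+1) * (1 + real n * ln (real (card (UNIV::'x set)))) \<ge> 2 * 1"
    by (intro mult_mono) auto
  then show ?thesis unfolding Mj_def by simp
qed

lemma kb_ge1: "kb n j \<ge> 1"
  unfolding kb_def using Mj_ge2[of n j] by (simp add: le_nat_floor)

lemma NT_pos: "NT n \<ge> 1"
proof -
  have "seq_type (replicate n undefined) \<in> seq_type ` {zs::'z list. length zs = n}" by simp
  then have "seq_type ` {zs::'z list. length zs = n} \<noteq> {}" by blast
  moreover have "finite (seq_type ` {zs::'z list. length zs = n})" by (simp add: finite_len)
  ultimately show ?thesis unfolding NT_def by (simp add: Suc_le_eq card_gt_0_iff)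
qed

lemma wj_pos: "wj j > 0" unfolding wj_def by simp

lemma jj_le_JJ: "admQ Q \<Longrightarrow> jj Q n v \<le> JJ Q n"
  unfolding jj_def JJ_def using ell_le[of Q n v] by (intro nat_mono floor_mono)

lemma kk_lt_kb: "admQ Q \<Longrightarrow> v \<in> verts n \<Longrightarrow> kk Q n v < kb n (jj Q n v)"
proof -
  assume a: "admQ Q" and v: "v \<in> verts n"
  have "kk Q n v < length (Cov Q n (snd v) (jj Q n v))" using kk_props[OF a v] by simp
  moreover have "real (length (Cov Q n (snd v) (jj Q n v))) \<le> Mj n (jj Q n v)" using Cov_props[OF a] by blast
  then have "length (Cov Q n (snd v) (jj Q n v)) \<le> kb n (jj Q n v)" unfolding kb_def by (simp add: le_nat_floor)
  ultimately show ?thesis by simp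
qed

lemma sQ_sum:
  assumes a: "admQ Q"
  shows "(\<Sum>col\<in>cQ Q n ` verts n. sQ n col) \<le> 1"
proof -
  let ?TS = "seq_type ` {zs::'z list. length zs = n}"
  let ?Sig = "SIGMA j:{..JJ Q n}. {..<kb n j}"
  let ?E = "prod_encode ` ?Sig"
  have fTS: "finite ?TS" by (simp add: finite_len)
  have fE: "finite ?E" by simp
  have sub: "cQ Q n ` verts n \<subseteq> ?TS \<times> ?E"
  proof
    fix col assume "col \<in> cQ Q n ` verts n"
    then obtain v where v: "v \<in> verts n" "col = cQ Q n v" by blast
    have "snd v \<in> {zs. length zs = n}" using v by (auto simp: verts_def)
    then have "fst col \<in> ?TS" using v unfolding cQ_def by auto
    moreover have "(jj Q n v, kk Q n v) \<in> ?Sig" using jj_le_JJ[OF a] kk_lt_kb[OF a v(1)] by auto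
    then have "snd col \<in> ?E" using v unfolding cQ_def ctQ_def by (cases v) auto
    ultimately show "col \<in> ?TS \<times> ?E" by (cases col) auto
  qed
  have snn: "sQ n col \<ge> 0" for col unfolding sQ_def using wj_pos by (simp add: less_imp_le)
  have "(\<Sum>col\<in>cQ Q n ` verts n. sQ n col) \<le> (\<Sum>col\<in>?TS \<times> ?E. sQ n col)"
    by (rule sum_mono2) (use fTS fE sub snn in auto)
  also have "\<dots> = (\<Sum>T\<in>?TS. \<Sum>m\<in>?E. sQ n (T, m))" by (rule sum.cartesian_product')
  also have "\<dots> = real (NT n) * (\<Sum>m\<in>?E. wj (fst (prod_decode m)) / (real (kb n (fst (prod_decode m))) * real (NT n)))"
    unfolding sQ_def NT_def by simp
  also have "(\<Sum>m\<in>?E. wj (fst (prod_decode m)) / (real (kb n (fst (prod_decode m))) * real (NT n)))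
      = (\<Sum>p\<in>?Sig. wj (fst p) / (real (kb n (fst p)) * real (NT n)))"
    by (subst sum.reindex) (auto simp: inj_on_def prod_encode_eq)
  also have "\<dots> = (\<Sum>j\<le>JJ Q n. \<Sum>k<kb n j. wj j / (real (kb n j) * real (NT n)))"
    by (subst sum.Sigma) (simp_all add: case_prod_unfold)
  also have "\<dots> = (\<Sum>j\<le>JJ Q n. wj j / real (NT n))"
  proof (rule sum.cong[OF refl])
    fix j have "real (kb n j) \<ge> 1" using kb_ge1[of n j] by simp
    then show "(\<Sum>k<kb n j. wj j / (real (kb n j) * real (NT n))) = wj j / real (NT n)" by simp
  qed
  also have "real (NT n) * \<dots> = (\<Sum>j\<le>JJ Q n. wj j)"
    using NT_pos[of n] by (simp add: sum_distrib_left)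
  also have "\<dots> = 1 - 1 / real (JJ Q n + 2)" unfolding wj_def by (rule sum_wj)
  also have "\<dots> \<le> 1" by simp
  finally show ?thesis .
qed

definition RR :: "('z \<Rightarrow> 'x \<Rightarrow> 'x set \<Rightarrow> real) \<Rightarrow> nat \<Rightarrow> real" where
  "RR Q n = 1 + log 2 (1 + real n * ln (real (card (UNIV::'x set)))) + 2 * log 2 (real n * BB Q + 2)
            + real (card (UNIV::'z set)) * log 2 (real n + 1)"

lemma sQ_pos: "sQ n col > 0"
  unfolding sQ_def using wj_pos kb_ge1 NT_pos by (simp add: Suc_le_eq)

lemma mlog_sQ:
  assumes a: "admQ Q" and v: "v \<in> verts n"
  shows "- log 2 (sQ n (cQ Q n v)) \<le> ell Q n v + RR Q n"
proof -
  let ?j = "jj Q n v"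
  let ?A = "1 + real n * ln (real (card (UNIV::'x set)))"
  have dec: "fst (prod_decode (snd (cQ Q n v))) = ?j" unfolding cQ_def ctQ_def by (cases v) simp
  have kbp: "real (kb n ?j) > 0" using kb_ge1[of n ?j] by simp
  have ntp: "real (NT n) > 0" using NT_pos[of n] by simp
  have jp: "real (?j+1) * real (?j+2) > 0" by simp
  have "- log 2 (sQ n (cQ Q n v)) = - log 2 (wj ?j / (real (kb n ?j) * real (NT n)))"
    unfolding sQ_def dec ..
  also have "\<dots> = log 2 (real (kb n ?j)) + log 2 (real (NT n)) + log 2 (real (?j+1) * real (?j+2))"
    unfolding wj_def using kbp ntp jp
    by (simp add: log2_div_pos log2_mult_pos log_divide del: of_nat_add)
  also have "log 2 (real (kb n ?j)) \<le> real (?j + 1) + log 2 ?A"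
  proof -
    have "real (kb n ?j) \<le> Mj n ?j" unfolding kb_def using Mj_ge2[of n ?j] by simp
    then have "log 2 (real (kb n ?j)) \<le> log 2 (Mj n ?j)" using kbp by simp
    also have "\<dots> = log 2 (2 ^ (?j+1)) + log 2 ?A" unfolding Mj_def
      using ln_card_nonneg by (intro log2_mult_pos) (auto simp: add_pos_nonneg)
    also have "log 2 ((2::real) ^ (?j+1)) = real (?j+1)" by (subst log_nat_power) auto
    finally show ?thesis .
  qed
  also have "log 2 (real (NT n)) \<le> real (card (UNIV::'z set)) * log 2 (real n + 1)"
  proof -
    have "real (NT n) \<le> real ((n+1) ^ card (UNIV::'z set))" unfolding NT_def of_nat_le_iff by (rule card_seq_types)
    then have "log 2 (real (NT n)) \<le> log 2 (real ((n+1) ^ card (UNIV::'z set)))" using ntp by simp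
    also have "\<dots> = real (card (UNIV::'z set)) * log 2 (real n + 1)" by (simp add: log_nat_power add.commute)
    finally show ?thesis .
  qed
  also have "log 2 (real (?j+1) * real (?j+2)) \<le> 2 * log 2 (real n * BB Q + 2)"
  proof -
    have jb: "real ?j \<le> real n * BB Q" using jj_le[OF a, of n v] ell_le[OF a, of n v] by linarith
    have "real (?j+1) * real (?j+2) \<le> (real n * BB Q + 2) * (real n * BB Q + 2)"
      using jb by (intro mult_mono) auto
    then have "log 2 (real (?j+1) * real (?j+2)) \<le> log 2 ((real n * BB Q + 2) * (real n * BB Q + 2))"
      using jp by (intro log_mono) auto
    also have "\<dots> = 2 * log 2 (real n * BB Q + 2)"
      using BB_nonneg[OF a] by (simp add: log2_mult_pos add_nonneg_pos)
    finally show ?thesis .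
  qed
  finally have "- log 2 (sQ n (cQ Q n v)) \<le> real ?j + 1 + log 2 ?A + real (card (UNIV::'z set)) * log 2 (real n + 1) + 2 * log 2 (real n * BB Q + 2)"
    by simp
  then show ?thesis unfolding RR_def using jj_le[OF a, of n v] by linarith
qed

lemma entropy_ctQ:
  assumes a: "admQ Q"
  shows "coloring_entropy P g n (ctQ Q n) \<le> (\<Sum>v\<in>verts n. mu v * ell Q n v) + RR Q n"
proof -
  have ce: "coloring_entropy P g n (ctQ Q n) = entropy_of (pcol n (cQ Q n)) (cQ Q n ` verts n)"
    unfolding coloring_entropy_def Let_def pcol_def cQ_def by (simp add: case_prod_unfold)
  have "entropy_of (pcol n (cQ Q n)) (cQ Q n ` verts n) \<le> (\<Sum>v\<in>verts n. mu v * (- log 2 (sQ n (cQ Q n v))))"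
    by (rule gibbs_upper) (use sQ_pos sQ_sum[OF a] in auto)
  also have "\<dots> \<le> (\<Sum>v\<in>verts n. mu v * (ell Q n v + RR Q n))"
    by (intro sum_mono mult_left_mono mlog_sQ[OF a]) auto
  also have "\<dots> = (\<Sum>v\<in>verts n. mu v * ell Q n v) + RR Q n"
    by (simp add: distrib_left sum.distrib sum_distrib_right[symmetric] sum_mu)
  finally show ?thesis using ce by simp
qed

end

lemma log_sublinear:
  assumes e: "e > 0"
  shows "eventually (\<lambda>n::nat. log 2 (real n + 1) \<le> e * real n) sequentially"
proof -
  have lim: "((\<lambda>n::nat. ln (1 + real n) / (1 + real n)) \<longlongrightarrow> 0) sequentially"
    by (rule filterlim_compose[OF ln_x_over_x_tendsto_0])
       (rule filterlim_tendsto_add_at_top[OF tendsto_const filterlim_real_sequentially])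
  define d where "d = e * ln 2 / 2"
  have d: "d > 0" unfolding d_def using e by simp
  have ev1: "eventually (\<lambda>n::nat. ln (1 + real n) / (1 + real n) < d) sequentially"
    using order_tendstoD(2)[OF lim d] .
  have ev2: "eventually (\<lambda>n::nat. n \<ge> 1) sequentially" by (rule eventually_ge_at_top)
  show ?thesis
  proof (rule eventually_mono[OF eventually_conj[OF ev1 ev2]])
    fix n :: nat assume h: "ln (1 + real n) / (1 + real n) < d \<and> 1 \<le> n"
    have p: "1 + real n > 0" by simp
    have "ln (1 + real n) < d * (1 + real n)" using h p by (simp add: divide_less_eq)
    also have "\<dots> \<le> d * (2 * real n)" using h d by (intro mult_left_mono) auto
    finally have "ln (1 + real n) < e * ln 2 * real n" unfolding d_def by simp
    then have i: "ln (real n + 1) \<le> (e * real n) * ln 2" by (simp add: add.commute mult_ac)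
    have l2: "ln 2 > (0::real)" by simp
    have "ln (real n + 1) / ln 2 \<le> e * real n" using i l2 by (simp add: divide_le_eq)
    then show "log 2 (real n + 1) \<le> e * real n" by (simp add: log_def)
  qed
qed

lemma const_sublinear:
  assumes e: "e > 0"
  shows "eventually (\<lambda>n::nat. C \<le> e * real n) sequentially"
proof -
  have "eventually (\<lambda>n::nat. n \<ge> nat \<lceil>C / e\<rceil>) sequentially" by (rule eventually_ge_at_top)
  then show ?thesis
  proof (rule eventually_mono)
    fix n :: nat assume "n \<ge> nat \<lceil>C / e\<rceil>"
    then have "real n \<ge> C / e" by linarith
    then show "C \<le> e * real n" using e by (simp add: divide_le_eq mult.commute)
  qed
qed

context LS begin

lemma exists_Q:
  assumes e: "\<epsilon> > 0"
  shows "\<exists>Q. admQ Q \<and> (\<forall>z. mutual_info (Gz_dist P g z) (Q z) \<le> korner_entropy (Gz_adj P f g z) (Gz_dist P g z) + \<epsilon>)"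
proof -
  have "\<forall>z. \<exists>Qz. admissible_cond (Gz_adj P f g z) Qz \<and> mutual_info (Gz_dist P g z) Qz \<le> korner_entropy (Gz_adj P f g z) (Gz_dist P g z) + \<epsilon>"
  proof
    fix z
    let ?S = "{mutual_info (Gz_dist P g z) Q |Q. admissible_cond (Gz_adj P f g z) Q}"
    let ?Q0 = "\<lambda>x W. if W = {x} then (1::real) else 0"
    have adm0: "admissible_cond (Gz_adj P f g z) ?Q0"
      unfolding admissible_cond_def indep_set_def Gz_adj_def by (auto simp: sum.delta)
    then have ne: "?S \<noteq> {}" by blast
    have "Inf ?S < korner_entropy (Gz_adj P f g z) (Gz_dist P g z) + \<epsilon>"
      unfolding korner_entropy_def using e by simp
    then obtain m where "m \<in> ?S" "m < korner_entropy (Gz_adj P f g z) (Gz_dist P g z) + \<epsilon>"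
      using cInf_lessD[OF ne] by blast
    then show "\<exists>Qz. admissible_cond (Gz_adj P f g z) Qz \<and> mutual_info (Gz_dist P g z) Qz \<le> korner_entropy (Gz_adj P f g z) (Gz_dist P g z) + \<epsilon>"
      by force
  qed
  then obtain Q where "\<forall>z. admissible_cond (Gz_adj P f g z) (Q z) \<and> mutual_info (Gz_dist P g z) (Q z) \<le> korner_entropy (Gz_adj P f g z) (Gz_dist P g z) + \<epsilon>"
    by metis
  then show ?thesis unfolding admQ_def by blast
qed

lemma upper_n:
  assumes a: "admQ Q" and good: "\<forall>z. mutual_info (Gz_dist P g z) (Q z) \<le> korner_entropy (Gz_adj P f g z) (Gz_dist P g z) + \<epsilon>"
  shows "coloring_entropy P g n (ctQ Q n) \<le> real n * (KK + \<epsilon>) + RR Q n"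
proof -
  have "(\<Sum>z\<in>UNIV. PgY P g z * (\<Sum>x\<in>UNIV. Gz_dist P g z x * (- log 2 (pp Q z x))))
      \<le> (\<Sum>z\<in>UNIV. PgY P g z * (korner_entropy (Gz_adj P f g z) (Gz_dist P g z) + \<epsilon>))"
  proof (rule sum_mono)
    fix z
    have "(\<Sum>x\<in>UNIV. Gz_dist P g z x * (- log 2 (pp Q z x))) \<le> korner_entropy (Gz_adj P f g z) (Gz_dist P g z) + \<epsilon>"
      using jensen[OF a, of z] good by (meson order_trans)
    then show "PgY P g z * (\<Sum>x\<in>UNIV. Gz_dist P g z x * (- log 2 (pp Q z x))) \<le> PgY P g z * (korner_entropy (Gz_adj P f g z) (Gz_dist P g z) + \<epsilon>)"
      using PgY_pos[of z] by (intro mult_left_mono) auto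
  qed
  also have "\<dots> = KK + \<epsilon>" unfolding KK_def by (simp add: distrib_left sum.distrib sum_distrib_right[symmetric] sum_PgY)
  finally have "(\<Sum>v\<in>verts n. mu v * ell Q n v) \<le> real n * (KK + \<epsilon>)"
    unfolding E_ell[OF a] by (intro mult_left_mono) auto
  then show ?thesis using entropy_ctQ[OF a, of n] by linarith
qed

lemma lower_all:
  assumes "Sn_coloring P f g n ct"
  shows "coloring_entropy P g n ct \<ge> real n * KK"
proof -
  let ?c = "\<lambda>v. (seq_type (snd v), ct (fst v) (snd v))"
  have ce: "coloring_entropy P g n ct = entropy_of (pcol n ?c) (?c ` verts n)"
    unfolding coloring_entropy_def Let_def pcol_def by (simp add: case_prod_unfold)
  have "\<forall>v\<in>verts n. \<forall>w\<in>verts n. char_adj P f g n v w \<longrightarrow> ?c v \<noteq> ?c w"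
    using assms unfolding Sn_coloring_def by blast
  then show ?thesis unfolding ce by (rule lower)
qed

lemma RR_bound:
  assumes a: "admQ Q"
  shows "RR Q n \<le> (1 + log 2 (1 + ln (real (card (UNIV::'x set)))) + 2 * log 2 (BB Q + 2))
                  + (3 + real (card (UNIV::'z set))) * log 2 (real n + 1)"
proof -
  let ?A = "ln (real (card (UNIV::'x set)))"
  have A: "?A \<ge> 0" by (rule ln_card_nonneg)
  have B: "BB Q \<ge> 0" by (rule BB_nonneg[OF a])
  have "log 2 (1 + real n * ?A) \<le> log 2 ((1 + ?A) * (real n + 1))"
  proof (rule log_mono)
    show "0 < 1 + real n * ?A" using A by (simp add: add_pos_nonneg)
    show "1 + real n * ?A \<le> (1 + ?A) * (real n + 1)" using A by (simp add: algebra_simps)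
  qed simp
  also have "\<dots> = log 2 (1 + ?A) + log 2 (real n + 1)" using A by (intro log2_mult_pos) auto
  finally have l1: "log 2 (1 + real n * ?A) \<le> log 2 (1 + ?A) + log 2 (real n + 1)" .
  have "log 2 (real n * BB Q + 2) \<le> log 2 ((BB Q + 2) * (real n + 1))"
  proof (rule log_mono)
    show "0 < real n * BB Q + 2" using B by (simp add: add_nonneg_pos)
    show "real n * BB Q + 2 \<le> (BB Q + 2) * (real n + 1)" using B by (simp add: algebra_simps)
  qed simp
  also have "\<dots> = log 2 (BB Q + 2) + log 2 (real n + 1)" using B by (intro log2_mult_pos) auto
  finally have l2: "log 2 (real n * BB Q + 2) \<le> log 2 (BB Q + 2) + log 2 (real n + 1)" .
  show ?thesis unfolding RR_def using l1 l2 by (simp add: algebra_simps)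
qed

lemma main:
  "(\<lambda>n. Inf {coloring_entropy P g n ct | ct. Sn_coloring P f g n ct}
            - real n * (\<Sum>z\<in>UNIV. PgY P g z * korner_entropy (Gz_adj P f g z) (Gz_dist P g z)))
         \<in> o(\<lambda>n. real n)"
proof (rule landau_o.smallI)
  fix c :: real assume c: "c > 0"
  define \<epsilon> where "\<epsilon> = c / 2"
  have e: "\<epsilon> > 0" unfolding \<epsilon>_def using c by simp
  obtain Q where a: "admQ Q" and good: "\<forall>z. mutual_info (Gz_dist P g z) (Q z) \<le> korner_entropy (Gz_adj P f g z) (Gz_dist P g z) + \<epsilon>"
    using exists_Q[OF e] by blast
  define C0 where "C0 = 1 + log 2 (1 + ln (real (card (UNIV::'x set)))) + 2 * log 2 (BB Q + 2)"
  define C1 where "C1 = 3 + real (card (UNIV::'z set))"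
  have C1: "C1 > 0" unfolding C1_def by simp
  have ev: "eventually (\<lambda>n::nat. C0 \<le> (\<epsilon>/2) * real n \<and> log 2 (real n + 1) \<le> (\<epsilon> / 2 / C1) * real n) sequentially"
    using const_sublinear[of "\<epsilon>/2" C0] log_sublinear[of "\<epsilon>/2/C1"] e C1 by (auto intro: eventually_conj)
  show "eventually (\<lambda>n. norm (Inf {coloring_entropy P g n ct | ct. Sn_coloring P f g n ct}
            - real n * (\<Sum>z\<in>UNIV. PgY P g z * korner_entropy (Gz_adj P f g z) (Gz_dist P g z)))
         \<le> c * norm (real n)) at_top"
  proof (rule eventually_mono[OF ev])
    fix n :: nat assume h: "C0 \<le> (\<epsilon>/2) * real n \<and> log 2 (real n + 1) \<le> (\<epsilon> / 2 / C1) * real n"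
    let ?S = "{coloring_entropy P g n ct | ct. Sn_coloring P f g n ct}"
    have mem: "coloring_entropy P g n (ctQ Q n) \<in> ?S" using ctQ_proper[OF a] by blast
    have lb: "\<forall>x\<in>?S. real n * KK \<le> x" using lower_all by blast
    have I1: "Inf ?S \<ge> real n * KK" using mem lb by (intro cInf_greatest) auto
    have "Inf ?S \<le> coloring_entropy P g n (ctQ Q n)"
    proof (rule cInf_lower[OF mem])
      show "bdd_below ?S" using lb by (intro bdd_belowI[of _ "real n * KK"]) blast
    qed
    also have "\<dots> \<le> real n * (KK + \<epsilon>) + RR Q n" by (rule upper_n[OF a good])
    also have "RR Q n \<le> C0 + C1 * log 2 (real n + 1)" using RR_bound[OF a, of n] unfolding C0_def C1_def .
    also have "C1 * log 2 (real n + 1) \<le> C1 * ((\<epsilon> / 2 / C1) * real n)" using h C1 by (intro mult_left_mono) auto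
    also have "C1 * ((\<epsilon> / 2 / C1) * real n) = (\<epsilon>/2) * real n" using C1 by simp
    finally have I2: "Inf ?S \<le> real n * KK + c * real n" using h unfolding \<epsilon>_def by (simp add: algebra_simps)
    show "norm (Inf ?S - real n * (\<Sum>z\<in>UNIV. PgY P g z * korner_entropy (Gz_adj P f g z) (Gz_dist P g z))) \<le> c * norm (real n)"
      using I1 I2 unfolding KK_def by simp
  qed
qed

end

theorem lemma3:
  fixes P :: "'x::finite \<Rightarrow> 'y::finite \<Rightarrow> real"
    and f :: "'x \<Rightarrow> 'y \<Rightarrow> 'u::finite"
    and g :: "'y \<Rightarrow> 'z::finite"
  assumes "is_joint_pmf P"
    and "\<forall>x. (\<Sum>y\<in>UNIV. P x y) > 0"
    and "\<forall>y. (\<Sum>x\<in>UNIV. P x y) > 0"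
    and "\<forall>z x x'. \<exists>y. g y = z \<and> P x y * P x' y > 0"
  shows "(\<lambda>n. Inf {coloring_entropy P g n ct | ct. Sn_coloring P f g n ct}
            - real n * (\<Sum>z\<in>UNIV. PgY P g z * korner_entropy (Gz_adj P f g z) (Gz_dist P g z)))
         \<in> o(\<lambda>n. real n)"
proof -
  interpret LS P f g using assms(1,4) by unfold_locales
  show ?thesis by (rule main)
qed

end
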